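(* Let $\Gamma=(G,w,\ell)$ be a tropical curve and $P\in\mathcal C_G$. Then $[T_P]$ is a theta-characteristic of $\Gamma$, and the map $$\beta\colon \mathcal C_G\longrightarrow T^{\mathrm{trop}}_\Gamma,\qquad P\longmapsto [T_P]$$ is a bijection.
   Context: A tropical curve is a triple $\Gamma=(G,w,\ell)$ where $G=(V,E)$ is a finite connected graph (loops and multiple edges allowed), $w\colon V\to\mathbb Z_{\ge 0}$ is a weight function with $2w(v)-2+\deg_G(v)>0$ for all $v$ (degrees count loops twice), and $\ell\colon E\to\mathbb R_{>0}$. Its genus is $g=\sum_v w(v)+|E|-|V|+1$. $\Gamma$ is regarded as a metric space by identifying each edge $e$ with a segment (a circle if $e$ is a loop) of length $\ell(e)$, glued at vertices; $p_e$ denotes the mid-point of $e$. Divisors, rational functions, $\operatorname{div}(f)$ (sum of outgoing slopes at each point) and $\operatorname{Pic}(\Gamma)=\operatorname{Div}(\Gamma)/\{\operatorname{div}(f)\}$ are as usual in tropical geometry; $[D]$ is the class of $D$. The canonical divisor is $K_\Gamma=\sum_{v\in V}(2w(v)-2+\deg_G(v))v$. A theta-characteristic of $\Gamma$ is a class $[D]\in\operatorname{Pic}(\Gamma)$ with $[2D]=[K_\Gamma]$; their set is $T^{\mathrm{trop}}_\Gamma$. $\mathcal C_G$ is the set of subsets $P\subseteq E$ such that every vertex has even degree in the subgraph spanned by $P$ (loops counting twice). For $P\in\mathcal C_G$, $$T_P:=\sum_{v\in V}\Big(\frac{\deg_P(v)}{2}-1+w(v)\Big)v+\sum_{e\in E\setminus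 P}p_e.$$ *)

theory Defs
  imports "HOL-Analysis.Analysis"
begin

text \<open>A graph is given by a vertex set V, an edge set E and a function ends
assigning to every edge an (arbitrarily oriented) pair of endpoints
(tail, head); a loop has tail = head.  The orientation is only an auxiliary
parametrisation of the edges.\<close>

definition tl_v :: "('e \<Rightarrow> 'v \<times> 'v) \<Rightarrow> 'e \<Rightarrow> 'v" where
  "tl_v ends e = fst (ends e)"

definition hd_v :: "('e \<Rightarrow> 'v \<times> 'v) \<Rightarrow> 'e \<Rightarrow> 'v" where
  "hd_v ends e = snd (ends e)"

definition deg_in :: "'e set \<Rightarrow> ('e \<Rightarrow> 'v \<times> 'v) \<Rightarrow> 'v \<Rightarrow> nat" where
  "deg_in P ends v = card {e \<in> P. tl_v ends e = v} + card {e \<in> P. hd_v ends e = v}"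

definition adjacent :: "'e set \<Rightarrow> ('e \<Rightarrow> 'v \<times> 'v) \<Rightarrow> ('v \<times> 'v) set" where
  "adjacent E ends = {(u, v). \<exists>e\<in>E. ends e = (u, v) \<or> ends e = (v, u)}"

definition tropical_curve ::
  "'v set \<Rightarrow> 'e set \<Rightarrow> ('e \<Rightarrow> 'v \<times> 'v) \<Rightarrow> ('v \<Rightarrow> nat) \<Rightarrow> ('e \<Rightarrow> real) \<Rightarrow> bool" where
  "tropical_curve V E ends w len \<longleftrightarrow>
     finite V \<and> finite E \<and> V \<noteq> {} \<and>
     (\<forall>e\<in>E. tl_v ends e \<in> V \<and> hd_v ends e \<in> V) \<and>
     (\<forall>u\<in>V. \<forall>v\<in>V. (u, v) \<in> (adjacent E ends)\<^sup>*) \<and>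
     (\<forall>v\<in>V. 2 * int (w v) - 2 + int (deg_in E ends v) > 0) \<and>
     (\<forall>e\<in>E. len e > 0)"

text \<open>Points of the metric space: vertices, and interior points of edges,
an interior point of e being given by its distance t \<in> (0, len e) from the tail.\<close>
datatype ('v, 'e) point = Vtx 'v | Pt 'e real

definition points :: "'v set \<Rightarrow> 'e set \<Rightarrow> ('e \<Rightarrow> real) \<Rightarrow> ('v, 'e) point set" where
  "points V E len = Vtx ` V \<union> {Pt e t | e t. e \<in> E \<and> 0 < t \<and> t < len e}"

definition is_divisor ::
  "'v set \<Rightarrow> 'e set \<Rightarrow> ('e \<Rightarrow> real) \<Rightarrow> (('v, 'e) point \<Rightarrow> int) \<Rightarrow> bool" where
  "is_divisor V E len D \<longleftrightarrow> finite {x. D x \<noteq> 0} \<and> {x. D x \<noteq> 0} \<subseteq> points V E len"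

definition pl_int :: "real \<Rightarrow> real \<Rightarrow> (real \<Rightarrow> real) \<Rightarrow> bool" where
  "pl_int a b g \<longleftrightarrow> (\<exists>k::nat. \<exists>p::nat \<Rightarrow> real. p 0 = a \<and> p k = b \<and>
      (\<forall>i<k. p i < p (Suc i)) \<and>
      (\<forall>i<k. \<exists>m::int. \<exists>c::real. \<forall>t\<in>{p i..p (Suc i)}. g t = c + of_int m * t))"

definition edge_fun ::
  "('e \<Rightarrow> 'v \<times> 'v) \<Rightarrow> ('e \<Rightarrow> real) \<Rightarrow> (('v, 'e) point \<Rightarrow> real) \<Rightarrow> 'e \<Rightarrow> real \<Rightarrow> real" where
  "edge_fun ends len f e t =
     (if t = 0 then f (Vtx (tl_v ends e))
      else if t = len e then f (Vtx (hd_v ends e))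
      else f (Pt e t))"

definition rational_fun ::
  "'e set \<Rightarrow> ('e \<Rightarrow> 'v \<times> 'v) \<Rightarrow> ('e \<Rightarrow> real) \<Rightarrow> (('v, 'e) point \<Rightarrow> real) \<Rightarrow> bool" where
  "rational_fun E ends len f \<longleftrightarrow> (\<forall>e\<in>E. pl_int 0 (len e) (edge_fun ends len f e))"

definition rslope :: "(real \<Rightarrow> real) \<Rightarrow> real \<Rightarrow> int" where
  "rslope g t = (THE s::int. (g has_real_derivative of_int s) (at_right t))"

definition lslope :: "(real \<Rightarrow> real) \<Rightarrow> real \<Rightarrow> int" where
  "lslope g t = (THE s::int. (g has_real_derivative of_int s) (at_left t))"

text \<open>div(f): sum of the outgoing slopes at every point.\<close>
definition divf ::
  "'v set \<Rightarrow> 'e set \<Rightarrow> ('e \<Rightarrow> 'v \<times> 'v) \<Rightarrow> ('e \<Rightarrow> real) \<Rightarrow> (('v, 'e) point \<Rightarrow> real)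
     \<Rightarrow> ('v, 'e) point \<Rightarrow> int" where
  "divf V E ends len f x = (case x of
      Vtx v \<Rightarrow> if v \<in> V then
          (\<Sum>e\<in>{e\<in>E. tl_v ends e = v}. rslope (edge_fun ends len f e) 0)
        - (\<Sum>e\<in>{e\<in>E. hd_v ends e = v}. lslope (edge_fun ends len f e) (len e))
        else 0
    | Pt e t \<Rightarrow> if e \<in> E \<and> 0 < t \<and> t < len e then
          rslope (edge_fun ends len f e) t - lslope (edge_fun ends len f e) t
        else 0)"

definition principal ::
  "'v set \<Rightarrow> 'e set \<Rightarrow> ('e \<Rightarrow> 'v \<times> 'v) \<Rightarrow> ('e \<Rightarrow> real) \<Rightarrow> (('v, 'e) point \<Rightarrow> int) \<Rightarrow> bool" where
  "principal V E ends len D \<longleftrightarrow>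
     (\<exists>f. rational_fun E ends len f \<and> D = divf V E ends len f)"

definition lin_equiv ::
  "'v set \<Rightarrow> 'e set \<Rightarrow> ('e \<Rightarrow> 'v \<times> 'v) \<Rightarrow> ('e \<Rightarrow> real)
     \<Rightarrow> (('v, 'e) point \<Rightarrow> int) \<Rightarrow> (('v, 'e) point \<Rightarrow> int) \<Rightarrow> bool" where
  "lin_equiv V E ends len D D' \<longleftrightarrow> principal V E ends len (\<lambda>x. D x - D' x)"

definition cls ::
  "'v set \<Rightarrow> 'e set \<Rightarrow> ('e \<Rightarrow> 'v \<times> 'v) \<Rightarrow> ('e \<Rightarrow> real)
     \<Rightarrow> (('v, 'e) point \<Rightarrow> int) \<Rightarrow> (('v, 'e) point \<Rightarrow> int) set" where
  "cls V E ends len D = {D'. is_divisor V E len D' \<and> lin_equiv V E ends len D D'}"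

definition canonical ::
  "'v set \<Rightarrow> 'e set \<Rightarrow> ('e \<Rightarrow> 'v \<times> 'v) \<Rightarrow> ('v \<Rightarrow> nat) \<Rightarrow> ('v, 'e) point \<Rightarrow> int" where
  "canonical V E ends w x = (case x of
      Vtx v \<Rightarrow> if v \<in> V then 2 * int (w v) - 2 + int (deg_in E ends v) else 0
    | Pt e t \<Rightarrow> 0)"

definition theta_chars ::
  "'v set \<Rightarrow> 'e set \<Rightarrow> ('e \<Rightarrow> 'v \<times> 'v) \<Rightarrow> ('v \<Rightarrow> nat) \<Rightarrow> ('e \<Rightarrow> real)
     \<Rightarrow> (('v, 'e) point \<Rightarrow> int) set set" where
  "theta_chars V E ends w len =
     {cls V E ends len D | D. is_divisor V E len D \<and>
        lin_equiv V E ends len (\<lambda>x. 2 * D x) (canonical V E ends w)}"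

definition even_subgraphs :: "'v set \<Rightarrow> 'e set \<Rightarrow> ('e \<Rightarrow> 'v \<times> 'v) \<Rightarrow> 'e set set" where
  "even_subgraphs V E ends = {P. P \<subseteq> E \<and> (\<forall>v\<in>V. even (deg_in P ends v))}"

text \<open>T_P; deg_P(v)/2 is an integer for P in C_G.\<close>
definition T_div ::
  "'v set \<Rightarrow> 'e set \<Rightarrow> ('e \<Rightarrow> 'v \<times> 'v) \<Rightarrow> ('v \<Rightarrow> nat) \<Rightarrow> ('e \<Rightarrow> real) \<Rightarrow> 'e set
     \<Rightarrow> ('v, 'e) point \<Rightarrow> int" where
  "T_div V E ends w len P x = (case x of
      Vtx v \<Rightarrow> if v \<in> V then int (deg_in P ends v div 2) - 1 + int (w v) else 0
    | Pt e t \<Rightarrow> if e \<in> E - P \<and> t = len e / 2 then 1 else 0)"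

end

theory Submission
  imports Defs
begin

definition rlin :: "(real \<Rightarrow> real) \<Rightarrow> real \<Rightarrow> int \<Rightarrow> bool" where
  "rlin g t m \<longleftrightarrow> (\<exists>d>0. \<exists>c. \<forall>u\<in>{t..t+d}. g u = c + of_int m * u)"
definition llin :: "(real \<Rightarrow> real) \<Rightarrow> real \<Rightarrow> int \<Rightarrow> bool" where
  "llin g t m \<longleftrightarrow> (\<exists>d>0. \<exists>c. \<forall>u\<in>{t-d..t}. g u = c + of_int m * u)"

lemma rlin_deriv:
  assumes "rlin g t m" shows "(g has_real_derivative of_int m) (at_right t)"
proof -
  from assms obtain d c where d: "d>0" "\<forall>u\<in>{t..t+d}. g u = c + of_int m * u"
    unfolding rlin_def by blast
  have "eventually (\<lambda>y. (g y - g t)/(y - t) = of_int m) (at_right t)"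
  proof (rule eventually_at_rightI[of t "t+d"])
    fix y assume y: "y \<in> {t<..<t+d}"
    then have "g y = c + of_int m * y" "g t = c + of_int m * t" using d by auto
    then show "(g y - g t)/(y - t) = of_int m" using y by (simp add: field_simps)
  qed (use d in auto)
  then show ?thesis unfolding has_field_derivative_iff by (rule tendsto_eventually)
qed

lemma llin_deriv:
  assumes "llin g t m" shows "(g has_real_derivative of_int m) (at_left t)"
proof -
  from assms obtain d c where d: "d>0" "\<forall>u\<in>{t-d..t}. g u = c + of_int m * u"
    unfolding llin_def by blast
  have "eventually (\<lambda>y. (g y - g t)/(y - t) = of_int m) (at_left t)"
  proof (rule eventually_at_leftI[of "t-d" t])
    fix y assume y: "y \<in> {t-d<..<t}"
    then have "g y = c + of_int m * y" "g t = c + of_int m * t" using d by auto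
    then show "(g y - g t)/(y - t) = of_int m" using y by (simp add: field_simps)
  qed (use d in auto)
  then show ?thesis unfolding has_field_derivative_iff by (rule tendsto_eventually)
qed

lemma rlin_rslope: assumes "rlin g t m" shows "rslope g t = m"
  unfolding rslope_def
proof (rule the_equality)
  show "(g has_real_derivative of_int m) (at_right t)" using rlin_deriv[OF assms] .
  fix s assume "(g has_real_derivative of_int s) (at_right t)"
  then have "of_int s = (of_int m :: real)"
    using rlin_deriv[OF assms] unfolding has_field_derivative_iff
    by (intro tendsto_unique[of "at_right t"]) auto
  then show "s = m" by simp
qed

lemma llin_lslope: assumes "llin g t m" shows "lslope g t = m"
  unfolding lslope_def
proof (rule the_equality)
  show "(g has_real_derivative of_int m) (at_left t)" using llin_deriv[OF assms] .
  fix s assume "(g has_real_derivative of_int s) (at_left t)"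
  then have "of_int s = (of_int m :: real)"
    using llin_deriv[OF assms] unfolding has_field_derivative_iff
    by (intro tendsto_unique[of "at_left t"]) auto
  then show "s = m" by simp
qed

definition plS :: "real \<Rightarrow> real \<Rightarrow> (real \<Rightarrow> real) \<Rightarrow> real set \<Rightarrow> bool" where
  "plS a b g S \<longleftrightarrow> finite S \<and> a \<in> S \<and> b \<in> S \<and>
     (\<forall>x y. a \<le> x \<longrightarrow> x < y \<longrightarrow> y \<le> b \<longrightarrow> {x<..<y} \<inter> S = {} \<longrightarrow>
        (\<exists>m::int. \<exists>c. \<forall>t\<in>{x..y}. g t = c + of_int m * t))"

lemma plS_piece:
  assumes "plS a b g S" "a \<le> x" "x < y" "y \<le> b" "{x<..<y} \<inter> S = {}"
  shows "\<exists>m::int. \<exists>c. \<forall>t\<in>{x..y}. g t = c + of_int m * t"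
  using assms unfolding plS_def by blast

lemma plS_right_piece:
  assumes "plS a b g S" "a \<le> t" "t < b"
  shows "\<exists>y. t < y \<and> y \<le> b \<and> y \<in> S \<and> {t<..<y} \<inter> S = {}"
proof -
  have fin: "finite (S \<inter> {t<..b})" and ne: "b \<in> S \<inter> {t<..b}" using assms unfolding plS_def by auto
  define y where "y = Min (S \<inter> {t<..b})"
  have y: "y \<in> S \<inter> {t<..b}" unfolding y_def using fin ne by (intro Min_in) auto
  have "{t<..<y} \<inter> S = {}"
  proof (rule ccontr)
    assume "{t<..<y} \<inter> S \<noteq> {}"
    then obtain s where s: "s \<in> S" "t < s" "s < y" by auto
    then have "s \<in> S \<inter> {t<..b}" using y by auto
    then have "y \<le> s" unfolding y_def using fin by (intro Min_le) auto
    then show False using s by simp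
  qed
  then show ?thesis using y by auto
qed

lemma plS_left_piece:
  assumes "plS a b g S" "a < t" "t \<le> b"
  shows "\<exists>y. a \<le> y \<and> y < t \<and> y \<in> S \<and> {y<..<t} \<inter> S = {}"
proof -
  have fin: "finite (S \<inter> {a..<t})" and ne: "a \<in> S \<inter> {a..<t}" using assms unfolding plS_def by auto
  define y where "y = Max (S \<inter> {a..<t})"
  have y: "y \<in> S \<inter> {a..<t}" unfolding y_def using fin ne by (intro Max_in) auto
  have "{y<..<t} \<inter> S = {}"
  proof (rule ccontr)
    assume "{y<..<t} \<inter> S \<noteq> {}"
    then obtain s where s: "s \<in> S" "y < s" "s < t" by auto
    then have "s \<in> S \<inter> {a..<t}" using y by auto
    then have "s \<le> y" unfolding y_def using fin by (intro Max_ge) auto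
    then show False using s by simp
  qed
  then show ?thesis using y by auto
qed

lemma piece_rlin:
  assumes "x < y" "\<forall>t\<in>{x..y}. g t = c + of_int m * t" shows "rlin g x m"
  unfolding rlin_def using assms by (intro exI[of _ "y - x"]) auto

lemma piece_llin:
  assumes "x < y" "\<forall>t\<in>{x..y}. g t = c + of_int m * t" shows "llin g y m"
  unfolding llin_def using assms by (intro exI[of _ "y - x"]) auto

lemma plS_rlin:
  assumes "plS a b g S" "a \<le> t" "t < b" shows "\<exists>m. rlin g t m"
proof -
  obtain y where y: "t < y" "y \<le> b" "y \<in> S" "{t<..<y} \<inter> S = {}"
    using plS_right_piece[OF assms] by blast
  then obtain m c where "\<forall>u\<in>{t..y}. g u = c + of_int m * u"
    using plS_piece[OF assms(1,2)] by blast
  then show ?thesis using piece_rlin y by blast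
qed

lemma plS_llin:
  assumes "plS a b g S" "a < t" "t \<le> b" shows "\<exists>m. llin g t m"
proof -
  obtain y where y: "a \<le> y" "y < t" "y \<in> S" "{y<..<t} \<inter> S = {}"
    using plS_left_piece[OF assms] by blast
  then obtain m c where "\<forall>u\<in>{y..t}. g u = c + of_int m * u"
    using plS_piece[OF assms(1) y(1,2) assms(3)] by blast
  then show ?thesis using piece_llin y by blast
qed

lemma pl_int_plS:
  assumes "pl_int a b g" shows "\<exists>S. plS a b g S"
proof -
  obtain k p where p: "p 0 = a" "p k = b" "\<forall>i<k. p i < p (Suc i)"
    "\<forall>i<k. \<exists>m::int. \<exists>c::real. \<forall>t\<in>{p i..p (Suc i)}. g t = c + of_int m * t"
    using assms unfolding pl_int_def by blast
  have "plS a b g (p ` {..k})"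
    unfolding plS_def
  proof (intro conjI allI impI)
    show "finite (p ` {..k})" "a \<in> p ` {..k}" "b \<in> p ` {..k}" using p by auto
    fix x y assume xy: "a \<le> x" "x < y" "y \<le> b" "{x<..<y} \<inter> p ` {..k} = {}"
    define J where "J = {j. j \<le> k \<and> p j \<le> x}"
    have finJ: "finite J" unfolding J_def by auto
    have "0 \<in> J" unfolding J_def using p xy by auto
    define i where "i = Max J"
    have iJ: "i \<in> J" unfolding i_def using finJ \<open>0 \<in> J\<close> by (intro Max_in) auto
    have "i \<noteq> k" using iJ p xy unfolding J_def by auto
    then have ik: "i < k" using iJ unfolding J_def by auto
    have "Suc i \<notin> J"
    proof
      assume "Suc i \<in> J"
      then have "Suc i \<le> Max J" using finJ by simp
      then show False unfolding i_def[symmetric] by simp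
    qed
    then have "x < p (Suc i)" using ik unfolding J_def by auto
    moreover have "p (Suc i) \<notin> {x<..<y}" using xy ik by auto
    ultimately have "y \<le> p (Suc i)" by auto
    moreover have "p i \<le> x" using iJ unfolding J_def by auto
    moreover obtain m c where "\<forall>t\<in>{p i..p (Suc i)}. g t = c + of_int m * t" using p ik by blast
    ultimately show "\<exists>m::int. \<exists>c. \<forall>t\<in>{x..y}. g t = c + of_int m * t" by auto
  qed
  then show ?thesis by blast
qed

lemma plS_pl_int:
  assumes ab: "a < b" and S: "plS a b g S" shows "pl_int a b g"
proof -
  define l where "l = sorted_list_of_set (S \<inter> {a..b})"
  have fin: "finite (S \<inter> {a..b})" using S unfolding plS_def by auto
  have setl: "set l = S \<inter> {a..b}" unfolding l_def using fin by simp
  have ss: "sorted_wrt (<) l" unfolding l_def by (rule strict_sorted_list_of_set)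
  have aS: "a \<in> set l" "b \<in> set l" using S ab unfolding setl plS_def by auto
  then have ne: "l \<noteq> []" by auto
  define k where "k = length l - 1"
  have kl: "k < length l" unfolding k_def using ne by (cases l) auto
  have mono: "i < j \<Longrightarrow> j < length l \<Longrightarrow> l ! i < l ! j" for i j
    using ss by (simp add: sorted_wrt_iff_nth_less)
  have inab: "i < length l \<Longrightarrow> l ! i \<in> {a..b}" for i using setl nth_mem by blast
  have l0: "l ! 0 = a"
  proof -
    obtain j where j: "j < length l" "l ! j = a" using aS by (auto simp: in_set_conv_nth)
    show ?thesis
    proof (cases "j = 0")
      case False then have "l ! 0 < a" using mono[of 0 j] j by auto
      then show ?thesis using inab[of 0] ne by auto
    qed (use j in auto)
  qed
  have lk: "l ! k = b"
  proof -
    obtain j where j: "j < length l" "l ! j = b" using aS by (auto simp: in_set_conv_nth)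
    show ?thesis
    proof (cases "j = k")
      case False then have "j < k" using j unfolding k_def by auto
      then have "b < l ! k" using mono[of j k] j kl by auto
      then show ?thesis using inab[of k] kl by auto
    qed (use j in auto)
  qed
  show ?thesis unfolding pl_int_def
  proof (intro exI[of _ k] exI[of _ "\<lambda>i. l ! i"] conjI allI impI)
    show "l ! 0 = a" "l ! k = b" by (fact l0, fact lk)
    fix i assume i: "i < k"
    then show lt: "l ! i < l ! Suc i" using mono kl by auto
    have "{l ! i<..<l ! Suc i} \<inter> S = {}"
    proof (rule ccontr)
      assume "{l ! i<..<l ! Suc i} \<inter> S \<noteq> {}"
      then obtain s where s: "s \<in> S" "l ! i < s" "s < l ! Suc i" by auto
      have "s \<in> {a..b}" using s inab[of i] inab[of "Suc i"] i kl by auto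
      then have "s \<in> set l" using s setl by auto
      then obtain j where j: "j < length l" "l ! j = s" by (auto simp: in_set_conv_nth)
      have "i < j"
      proof (rule ccontr)
        assume "\<not> i < j"
        then have "j \<le> i" by simp
        then have "l ! j \<le> l ! i" using mono[of j i] i kl by (cases "j = i") auto
        then show False using s j by auto
      qed
      moreover have "j < Suc i"
      proof (rule ccontr)
        assume "\<not> j < Suc i"
        then have "Suc i \<le> j" by simp
        then have "l ! Suc i \<le> l ! j" using mono[of "Suc i" j] j by (cases "j = Suc i") auto
        then show False using s j by auto
      qed
      ultimately show False by simp
    qed
    then show "\<exists>m::int. \<exists>c. \<forall>t\<in>{l ! i..l ! Suc i}. g t = c + of_int m * t"
      using plS_piece[OF S _ lt] inab[of i] inab[of "Suc i"] i kl by auto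
  qed
qed

lemma plS_add:
  assumes "plS a b f S" "plS a b g S'"
  shows "plS a b (\<lambda>t. f t + g t) (S \<union> S')"
  unfolding plS_def
proof (intro conjI allI impI)
  show "finite (S \<union> S')" "a \<in> S \<union> S'" "b \<in> S \<union> S'" using assms unfolding plS_def by auto
  fix x y assume xy: "a \<le> x" "x < y" "y \<le> b" "{x<..<y} \<inter> (S \<union> S') = {}"
  obtain m c where 1: "\<forall>t\<in>{x..y}. f t = c + of_int m * t"
    using plS_piece[OF assms(1) xy(1-3)] xy(4) by blast
  obtain m' c' where 2: "\<forall>t\<in>{x..y}. g t = c' + of_int m' * t"
    using plS_piece[OF assms(2) xy(1-3)] xy(4) by blast
  show "\<exists>m::int. \<exists>c. \<forall>t\<in>{x..y}. f t + g t = c + of_int m * t"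
    using 1 2 by (intro exI[of _ "m + m'"] exI[of _ "c + c'"]) (auto simp: algebra_simps)
qed

lemma plS_scale:
  assumes "plS a b f S"
  shows "plS a b (\<lambda>t. of_int k * f t) S"
  unfolding plS_def
proof (intro conjI allI impI)
  show "finite S" "a \<in> S" "b \<in> S" using assms unfolding plS_def by auto
  fix x y assume xy: "a \<le> x" "x < y" "y \<le> b" "{x<..<y} \<inter> S = {}"
  obtain m c where 1: "\<forall>t\<in>{x..y}. f t = c + of_int m * t"
    using plS_piece[OF assms(1) xy(1-3)] xy(4) by blast
  show "\<exists>m::int. \<exists>c. \<forall>t\<in>{x..y}. of_int k * f t = c + of_int m * t"
    using 1 by (intro exI[of _ "k * m"] exI[of _ "of_int k * c"]) (auto simp: algebra_simps)
qed

lemma plS_cong: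
  assumes "plS a b f S" "\<And>t. a \<le> t \<Longrightarrow> t \<le> b \<Longrightarrow> f t = g t"
  shows "plS a b g S"
  unfolding plS_def
proof (intro conjI allI impI)
  show "finite S" "a \<in> S" "b \<in> S" using assms unfolding plS_def by auto
  fix x y assume xy: "a \<le> x" "x < y" "y \<le> b" "{x<..<y} \<inter> S = {}"
  obtain m c where 1: "\<forall>t\<in>{x..y}. f t = c + of_int m * t"
    using plS_piece[OF assms(1) xy(1-3)] xy(4) by blast
  show "\<exists>m::int. \<exists>c. \<forall>t\<in>{x..y}. g t = c + of_int m * t"
    using 1 assms(2) xy by (intro exI[of _ m] exI[of _ c]) auto
qed

lemma rlin_add: "rlin f t m1 \<Longrightarrow> rlin g t m2 \<Longrightarrow> rlin (\<lambda>u. f u + g u) t (m1 + m2)"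
proof -
  assume "rlin f t m1" "rlin g t m2"
  then obtain d1 c1 d2 c2 where "d1 > 0" "\<forall>u\<in>{t..t+d1}. f u = c1 + of_int m1 * u"
    "d2 > 0" "\<forall>u\<in>{t..t+d2}. g u = c2 + of_int m2 * u" unfolding rlin_def by blast
  then show ?thesis unfolding rlin_def
    by (intro exI[of _ "min d1 d2"] conjI exI[of _ "c1 + c2"]) (auto simp: algebra_simps)
qed

lemma llin_add: "llin f t m1 \<Longrightarrow> llin g t m2 \<Longrightarrow> llin (\<lambda>u. f u + g u) t (m1 + m2)"
proof -
  assume "llin f t m1" "llin g t m2"
  then obtain d1 c1 d2 c2 where "d1 > 0" "\<forall>u\<in>{t-d1..t}. f u = c1 + of_int m1 * u"
    "d2 > 0" "\<forall>u\<in>{t-d2..t}. g u = c2 + of_int m2 * u" unfolding llin_def by blast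
  then show ?thesis unfolding llin_def
    by (intro exI[of _ "min d1 d2"] conjI exI[of _ "c1 + c2"]) (auto simp: algebra_simps)
qed

lemma rlin_scale: "rlin f t m \<Longrightarrow> rlin (\<lambda>u. of_int k * f u) t (k * m)"
proof -
  assume "rlin f t m"
  then obtain d c where "d > 0" "\<forall>u\<in>{t..t+d}. f u = c + of_int m * u" unfolding rlin_def by blast
  then show ?thesis unfolding rlin_def
    by (intro exI[of _ d] conjI exI[of _ "of_int k * c"]) (auto simp: algebra_simps)
qed

lemma llin_scale: "llin f t m \<Longrightarrow> llin (\<lambda>u. of_int k * f u) t (k * m)"
proof -
  assume "llin f t m"
  then obtain d c where "d > 0" "\<forall>u\<in>{t-d..t}. f u = c + of_int m * u" unfolding llin_def by blast
  then show ?thesis unfolding llin_def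
    by (intro exI[of _ d] conjI exI[of _ "of_int k * c"]) (auto simp: algebra_simps)
qed

lemma plS_rslope_add:
  assumes "plS 0 L F S" "plS 0 L G S'" "0 \<le> t" "t < L"
  shows "rslope (\<lambda>u. F u + G u) t = rslope F t + rslope G t"
proof -
  obtain m1 m2 where "rlin F t m1" "rlin G t m2" using plS_rlin assms by metis
  then show ?thesis using rlin_add rlin_rslope by metis
qed

lemma plS_lslope_add:
  assumes "plS 0 L F S" "plS 0 L G S'" "0 < t" "t \<le> L"
  shows "lslope (\<lambda>u. F u + G u) t = lslope F t + lslope G t"
proof -
  obtain m1 m2 where "llin F t m1" "llin G t m2" using plS_llin assms by metis
  then show ?thesis using llin_add llin_lslope by metis
qed

lemma plS_rslope_scale:
  assumes "plS 0 L F S" "0 \<le> t" "t < L"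
  shows "rslope (\<lambda>u. of_int k * F u) t = k * rslope F t"
proof -
  obtain m1 where "rlin F t m1" using plS_rlin assms by metis
  then show ?thesis using rlin_scale rlin_rslope by metis
qed

lemma plS_lslope_scale:
  assumes "plS 0 L F S" "0 < t" "t \<le> L"
  shows "lslope (\<lambda>u. of_int k * F u) t = k * lslope F t"
proof -
  obtain m1 where "llin F t m1" using plS_llin assms by metis
  then show ?thesis using llin_scale llin_lslope by metis
qed

definition rat :: "'e set \<Rightarrow> ('e \<Rightarrow> 'v \<times> 'v) \<Rightarrow> ('e \<Rightarrow> real) \<Rightarrow> (('v, 'e) point \<Rightarrow> real) \<Rightarrow> bool" where
  "rat E ends len f \<longleftrightarrow> (\<forall>e\<in>E. \<exists>S. plS 0 (len e) (edge_fun ends len f e) S)"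

lemma rational_fun_iff:
  assumes "\<forall>e\<in>E. 0 < len e"
  shows "rational_fun E ends len f \<longleftrightarrow> rat E ends len f"
  unfolding rational_fun_def rat_def using assms pl_int_plS plS_pl_int by metis

lemma edge_fun_add:
  "edge_fun ends len (\<lambda>x. f x + g x) e = (\<lambda>t. edge_fun ends len f e t + edge_fun ends len g e t)"
  by (auto simp: edge_fun_def)

lemma edge_fun_scale:
  "edge_fun ends len (\<lambda>x. of_int k * f x) e = (\<lambda>t. of_int k * edge_fun ends len f e t)"
  by (auto simp: edge_fun_def)

lemma rat_add: "rat E ends len f \<Longrightarrow> rat E ends len g \<Longrightarrow> rat E ends len (\<lambda>x. f x + g x)"
  unfolding rat_def edge_fun_add using plS_add by blast

lemma rat_scale: "rat E ends len f \<Longrightarrow> rat E ends len (\<lambda>x. of_int k * f x)"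
  unfolding rat_def edge_fun_scale using plS_scale by blast

lemma divf_add:
  assumes "\<forall>e\<in>E. 0 < len e" "rat E ends len f" "rat E ends len g"
  shows "divf V E ends len (\<lambda>x. f x + g x) = (\<lambda>x. divf V E ends len f x + divf V E ends len g x)"
proof
  fix x
  have R: "rslope (edge_fun ends len (\<lambda>x. f x + g x) e) t =
     rslope (edge_fun ends len f e) t + rslope (edge_fun ends len g e) t"
    if h: "e \<in> E" "0 \<le> t" "t < len e" for e t
  proof -
    obtain S S' where "plS 0 (len e) (edge_fun ends len f e) S" "plS 0 (len e) (edge_fun ends len g e) S'"
      using assms h unfolding rat_def by blast
    then show ?thesis unfolding edge_fun_add using plS_rslope_add h by blast
  qed
  have L: "lslope (edge_fun ends len (\<lambda>x. f x + g x) e) t =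
     lslope (edge_fun ends len f e) t + lslope (edge_fun ends len g e) t"
    if h: "e \<in> E" "0 < t" "t \<le> len e" for e t
  proof -
    obtain S S' where "plS 0 (len e) (edge_fun ends len f e) S" "plS 0 (len e) (edge_fun ends len g e) S'"
      using assms h unfolding rat_def by blast
    then show ?thesis unfolding edge_fun_add using plS_lslope_add h by blast
  qed
  show "divf V E ends len (\<lambda>x. f x + g x) x = divf V E ends len f x + divf V E ends len g x"
  proof (cases x)
    case (Vtx v)
    have pos: "e \<in> E \<Longrightarrow> 0 < len e" for e using assms by auto
    have s1: "(\<Sum>e\<in>{e\<in>E. tl_v ends e = v}. rslope (edge_fun ends len (\<lambda>x. f x + g x) e) 0) =
      (\<Sum>e\<in>{e\<in>E. tl_v ends e = v}. rslope (edge_fun ends len f e) 0) +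
      (\<Sum>e\<in>{e\<in>E. tl_v ends e = v}. rslope (edge_fun ends len g e) 0)"
      unfolding sum.distrib[symmetric] using pos by (intro sum.cong refl R) auto
    have s2: "(\<Sum>e\<in>{e\<in>E. hd_v ends e = v}. lslope (edge_fun ends len (\<lambda>x. f x + g x) e) (len e)) =
      (\<Sum>e\<in>{e\<in>E. hd_v ends e = v}. lslope (edge_fun ends len f e) (len e)) +
      (\<Sum>e\<in>{e\<in>E. hd_v ends e = v}. lslope (edge_fun ends len g e) (len e))"
      unfolding sum.distrib[symmetric] using pos by (intro sum.cong refl L) auto
    show ?thesis unfolding Vtx divf_def point.case s1 s2 by simp
  next
    case (Pt e t)
    then show ?thesis unfolding divf_def point.case using R[of e t] L[of e t] by auto
  qed
qed

lemma divf_scale: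
  assumes "\<forall>e\<in>E. 0 < len e" "rat E ends len f"
  shows "divf V E ends len (\<lambda>x. of_int k * f x) = (\<lambda>x. k * divf V E ends len f x)"
proof
  fix x
  have R: "rslope (edge_fun ends len (\<lambda>x. of_int k * f x) e) t = k * rslope (edge_fun ends len f e) t"
    if h: "e \<in> E" "0 \<le> t" "t < len e" for e t
  proof -
    obtain S where "plS 0 (len e) (edge_fun ends len f e) S"
      using assms h unfolding rat_def by blast
    then show ?thesis unfolding edge_fun_scale using plS_rslope_scale h by blast
  qed
  have L: "lslope (edge_fun ends len (\<lambda>x. of_int k * f x) e) t = k * lslope (edge_fun ends len f e) t"
    if h: "e \<in> E" "0 < t" "t \<le> len e" for e t
  proof -
    obtain S where "plS 0 (len e) (edge_fun ends len f e) S"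
      using assms h unfolding rat_def by blast
    then show ?thesis unfolding edge_fun_scale using plS_lslope_scale h by blast
  qed
  show "divf V E ends len (\<lambda>x. of_int k * f x) x = k * divf V E ends len f x"
  proof (cases x)
    case (Vtx v)
    have pos: "e \<in> E \<Longrightarrow> 0 < len e" for e using assms by auto
    have s1: "(\<Sum>e\<in>{e\<in>E. tl_v ends e = v}. rslope (edge_fun ends len (\<lambda>x. of_int k * f x) e) 0) =
      k * (\<Sum>e\<in>{e\<in>E. tl_v ends e = v}. rslope (edge_fun ends len f e) 0)"
      unfolding sum_distrib_left using pos by (intro sum.cong refl R) auto
    have s2: "(\<Sum>e\<in>{e\<in>E. hd_v ends e = v}. lslope (edge_fun ends len (\<lambda>x. of_int k * f x) e) (len e)) =
      k * (\<Sum>e\<in>{e\<in>E. hd_v ends e = v}. lslope (edge_fun ends len f e) (len e))"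
      unfolding sum_distrib_left using pos by (intro sum.cong refl L) auto
    show ?thesis unfolding Vtx divf_def point.case s1 s2 by (simp add: right_diff_distrib)
  next
    case (Pt e t)
    then show ?thesis unfolding divf_def point.case using R[of e t] L[of e t] by (auto simp: right_diff_distrib)
  qed
qed

lemma rat_zero: "rat E ends len (\<lambda>x. 0)"
proof -
  have "plS 0 (len e) (\<lambda>t. 0) {0, len e}" for e
    unfolding plS_def by (auto intro!: exI[of _ 0])
  moreover have "edge_fun ends len (\<lambda>x. 0) e = (\<lambda>t. 0)" for e by (simp add: edge_fun_def fun_eq_iff)
  ultimately show ?thesis unfolding rat_def by auto
qed

lemma divf_zero:
  assumes "\<forall>e\<in>E. 0 < len e"
  shows "divf V E ends len (\<lambda>x. 0) = (\<lambda>x. 0)"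
proof -
  have "divf V E ends len (\<lambda>x. of_int 0 * 0) = (\<lambda>x. 0 * divf V E ends len (\<lambda>x. 0) x)"
    using divf_scale[OF assms rat_zero] .
  then show ?thesis by simp
qed

lemma principal_iff:
  assumes "\<forall>e\<in>E. 0 < len e"
  shows "principal V E ends len D \<longleftrightarrow> (\<exists>f. rat E ends len f \<and> D = divf V E ends len f)"
  unfolding principal_def rational_fun_iff[OF assms] ..

lemma principal_zero:
  assumes "\<forall>e\<in>E. 0 < len e" shows "principal V E ends len (\<lambda>x. 0)"
  unfolding principal_iff[OF assms]
  by (intro exI[of _ "\<lambda>x. 0"] conjI rat_zero divf_zero[OF assms, symmetric])

lemma principal_add:
  assumes "\<forall>e\<in>E. 0 < len e" "principal V E ends len D1" "principal V E ends len D2"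
  shows "principal V E ends len (\<lambda>x. D1 x + D2 x)"
proof -
  obtain f g where "rat E ends len f" "D1 = divf V E ends len f" "rat E ends len g" "D2 = divf V E ends len g"
    using assms unfolding principal_iff[OF assms(1)] by blast
  then show ?thesis unfolding principal_iff[OF assms(1)]
    by (intro exI[of _ "\<lambda>x. f x + g x"] conjI rat_add) (simp_all add: divf_add[OF assms(1)])
qed

lemma principal_scale:
  assumes "\<forall>e\<in>E. 0 < len e" "principal V E ends len D"
  shows "principal V E ends len (\<lambda>x. k * D x)"
proof -
  obtain f where "rat E ends len f" "D = divf V E ends len f"
    using assms unfolding principal_iff[OF assms(1)] by blast
  then show ?thesis unfolding principal_iff[OF assms(1)]
    by (intro exI[of _ "\<lambda>x. of_int k * f x"] conjI rat_scale) (simp_all add: divf_scale[OF assms(1)])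
qed

lemma principal_cong: "principal V E ends len D \<Longrightarrow> (\<And>x. D x = D' x) \<Longrightarrow> principal V E ends len D'"
proof -
  assume "principal V E ends len D" "\<And>x. D x = D' x"
  moreover have "D = D'" using \<open>\<And>x. D x = D' x\<close> by auto
  ultimately show ?thesis by simp
qed

lemma lin_equiv_refl: "\<forall>e\<in>E. 0 < len e \<Longrightarrow> lin_equiv V E ends len D D"
  unfolding lin_equiv_def using principal_zero by simp

lemma lin_equiv_sym:
  assumes "\<forall>e\<in>E. 0 < len e" "lin_equiv V E ends len D D'" shows "lin_equiv V E ends len D' D"
  using principal_scale[OF assms(1) assms(2)[unfolded lin_equiv_def], of "-1"]
  unfolding lin_equiv_def by (rule principal_cong) simp

lemma lin_equiv_trans:
  assumes "\<forall>e\<in>E. 0 < len e" "lin_equiv V E ends len D D'" "lin_equiv V E ends len D' D''"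
  shows "lin_equiv V E ends len D D''"
  using principal_add[OF assms(1) assms(2,3)[unfolded lin_equiv_def]]
  unfolding lin_equiv_def by (rule principal_cong) simp

lemma cls_eq:
  assumes "\<forall>e\<in>E. 0 < len e" "lin_equiv V E ends len D D'"
  shows "cls V E ends len D = cls V E ends len D'"
  unfolding cls_def using assms lin_equiv_trans lin_equiv_sym by blast

lemma cls_eqD:
  assumes "\<forall>e\<in>E. 0 < len e" "cls V E ends len D = cls V E ends len D'" "is_divisor V E len D'"
  shows "lin_equiv V E ends len D D'"
proof -
  have "D' \<in> cls V E ends len D'" unfolding cls_def using assms lin_equiv_refl by blast
  then show ?thesis using assms unfolding cls_def by blast
qed

lemma rslope_edge_add:
  assumes "rat E ends len f" "rat E ends len g" "e \<in> E" "0 \<le> t" "t < len e"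
  shows "rslope (edge_fun ends len (\<lambda>x. f x + g x) e) t =
     rslope (edge_fun ends len f e) t + rslope (edge_fun ends len g e) t"
proof -
  obtain S S' where "plS 0 (len e) (edge_fun ends len f e) S" "plS 0 (len e) (edge_fun ends len g e) S'"
    using assms unfolding rat_def by blast
  then show ?thesis unfolding edge_fun_add using plS_rslope_add assms by blast
qed

lemma rslope_edge_scale:
  assumes "rat E ends len f" "e \<in> E" "0 \<le> t" "t < len e"
  shows "rslope (edge_fun ends len (\<lambda>x. of_int k * f x) e) t = k * rslope (edge_fun ends len f e) t"
proof -
  obtain S where "plS 0 (len e) (edge_fun ends len f e) S"
    using assms unfolding rat_def by blast
  then show ?thesis unfolding edge_fun_scale using plS_rslope_scale assms by blast
qed

section \<open>Slopes along an edge\<close>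

lemma edge_induct:
  assumes S: "plS 0 L g S" and L: "0 < L"
    and H: "\<forall>t\<in>{0<..<L}. d dvd (rslope g t - lslope g t)"
  shows "\<forall>x\<in>{0<..L}. d dvd (lslope g x - rslope g 0) \<and> (\<forall>y\<in>{0..<x}. d dvd (rslope g y - rslope g 0))
     \<and> (d = 0 \<longrightarrow> (\<forall>u\<in>{0..x}. g u = g 0 + of_int (rslope g 0) * u))"
proof -
  have finS: "finite S" using S unfolding plS_def by auto
  have "\<forall>x\<in>{0<..L}. card (S \<inter> {0<..<x}) = n \<longrightarrow>
     d dvd (lslope g x - rslope g 0) \<and> (\<forall>y\<in>{0..<x}. d dvd (rslope g y - rslope g 0))
     \<and> (d = 0 \<longrightarrow> (\<forall>u\<in>{0..x}. g u = g 0 + of_int (rslope g 0) * u))" for n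
  proof (induction n)
    case 0
    show ?case
    proof (intro ballI impI)
      fix x assume x: "x \<in> {0<..L}" "card (S \<inter> {0<..<x}) = 0"
      then have e: "{0<..<x} \<inter> S = {}" using finS by auto
      obtain m c where mc: "\<forall>t\<in>{0..x}. g t = c + of_int m * t"
        using plS_piece[OF S _ _ _ e] x by auto
      have r0: "rslope g 0 = m" by (rule rlin_rslope[OF piece_rlin[of 0 x g c m]]) (use mc x  in auto)
      have lx: "lslope g x = m" by (rule llin_lslope[OF piece_llin[of 0 x g c m]]) (use mc x  in auto)
      have ry: "rslope g y = m" if "y \<in> {0..<x}" for y
        by (rule rlin_rslope[OF piece_rlin[of y x g c m]]) (use mc that  in auto)
      have "g 0 = c" using mc x by auto
      show "d dvd (lslope g x - rslope g 0) \<and> (\<forall>y\<in>{0..<x}. d dvd (rslope g y - rslope g 0))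
     \<and> (d = 0 \<longrightarrow> (\<forall>u\<in>{0..x}. g u = g 0 + of_int (rslope g 0) * u))"
      proof (intro conjI ballI impI)
        show "d dvd (lslope g x - rslope g 0)" using r0 lx by simp
        fix u assume "u \<in> {0..<x}" then show "d dvd (rslope g u - rslope g 0)" using r0 ry by simp
      next
        fix u assume "d = 0" "u \<in> {0..x}"
        then show "g u = g 0 + of_int (rslope g 0) * u" using mc r0 \<open>g 0 = c\<close> by simp
      qed
    qed
  next
    case (Suc n)
    show ?case
    proof (intro ballI impI)
      fix x assume x: "x \<in> {0<..L}" "card (S \<inter> {0<..<x}) = Suc n"
      have fin: "finite (S \<inter> {0<..<x})" using finS by auto
      have ne: "S \<inter> {0<..<x} \<noteq> {}" using x by auto
      define y where "y = Max (S \<inter> {0<..<x})"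
      have y: "y \<in> S \<inter> {0<..<x}" unfolding y_def using fin ne by (intro Max_in) auto
      have ymax: "s \<le> y" if "s \<in> S \<inter> {0<..<x}" for s unfolding y_def using fin that by simp
      have eq: "S \<inter> {0<..<x} = insert y (S \<inter> {0<..<y})"
      proof (rule set_eqI)
        fix s
        show "s \<in> S \<inter> {0<..<x} \<longleftrightarrow> s \<in> insert y (S \<inter> {0<..<y})"
        proof
          assume s: "s \<in> S \<inter> {0<..<x}"
          then have "s \<le> y" by (rule ymax)
          then show "s \<in> insert y (S \<inter> {0<..<y})" using s by auto
        next
          assume "s \<in> insert y (S \<inter> {0<..<y})"
          then show "s \<in> S \<inter> {0<..<x}" using y by auto
        qed
      qed
      have fy: "finite (S \<inter> {0<..<y})" using finS by auto
      have yn: "y \<notin> S \<inter> {0<..<y}" by auto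
      have "Suc n = card (insert y (S \<inter> {0<..<y}))" using x(2) eq by simp
      also have "\<dots> = Suc (card (S \<inter> {0<..<y}))" using card_insert_disjoint[OF fy yn] .
      finally have "card (S \<inter> {0<..<y}) = n" by simp
      then have IH: "d dvd (lslope g y - rslope g 0) \<and> (\<forall>u\<in>{0..<y}. d dvd (rslope g u - rslope g 0))
        \<and> (d = 0 \<longrightarrow> (\<forall>u\<in>{0..y}. g u = g 0 + of_int (rslope g 0) * u))"
        using Suc.IH[rule_format, of y] y x by fastforce
      have IH1: "d dvd (lslope g y - rslope g 0)" using IH by blast
      have IH2: "d dvd (rslope g u - rslope g 0)" if "u \<in> {0..<y}" for u using IH that by blast
      have IH3: "g u = g 0 + of_int (rslope g 0) * u" if "d = 0" "u \<in> {0..y}" for u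
        using IH that by blast
      have e: "{y<..<x} \<inter> S = {}"
      proof (rule ccontr)
        assume "{y<..<x} \<inter> S \<noteq> {}"
        then obtain s where s: "s \<in> S" "y < s" "s < x" by auto
        then have "s \<in> S \<inter> {0<..<x}" using y by auto
        then have "s \<le> y" by (rule ymax)
        then show False using s by simp
      qed
      obtain m c where mc: "\<forall>t\<in>{y..x}. g t = c + of_int m * t"
        using plS_piece[OF S _ _ _ e] x y by auto
      have lx: "lslope g x = m" by (rule llin_lslope[OF piece_llin[of y x g c m]]) (use mc y  in auto)
      have ry: "rslope g u = m" if "u \<in> {y..<x}" for u
        by (rule rlin_rslope[OF piece_rlin[of u x g c m]]) (use mc that  in auto)
      have "d dvd (rslope g y - lslope g y)" using H y x by auto
      moreover have "d dvd (lslope g y - rslope g 0)" by (rule IH1)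
      ultimately have "d dvd ((rslope g y - lslope g y) + (lslope g y - rslope g 0))" by (rule dvd_add)
      moreover have "rslope g y = m" using ry y by auto
      ultimately have dm: "d dvd (m - rslope g 0)" by simp
      have A: "d dvd (lslope g x - rslope g 0)" using lx dm by simp
      have B: "\<forall>u\<in>{0..<x}. d dvd (rslope g u - rslope g 0)"
      proof
        fix u assume u: "u \<in> {0..<x}"
        show "d dvd (rslope g u - rslope g 0)"
        proof (cases "u < y")
          case True then have "u \<in> {0..<y}" using u by simp
          then show ?thesis by (rule IH2)
        next
          case False then have "u \<in> {y..<x}" using u by simp
          then have "rslope g u = m" by (rule ry)
          then show ?thesis using dm by simp
        qed
      qed
      have C: "d = 0 \<longrightarrow> (\<forall>u\<in>{0..x}. g u = g 0 + of_int (rslope g 0) * u)"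
      proof (intro impI ballI)
        assume d0: "d = 0"
        then have m0: "m = rslope g 0" using dm by simp
        have gy: "g y = g 0 + of_int (rslope g 0) * y" using IH3[OF d0, of y] y by simp
        have "g y = c + of_int m * y" using mc y by auto
        then have c0: "c = g 0" using gy m0 by simp
        fix u assume u: "u \<in> {0..x}"
        show "g u = g 0 + of_int (rslope g 0) * u"
        proof (cases "u \<le> y")
          case True then have "u \<in> {0..y}" using u by simp
          then show ?thesis by (rule IH3[OF d0])
        next
          case False then have "u \<in> {y..x}" using u by simp
          then show ?thesis using mc c0 m0 by simp
        qed
      qed
      show "d dvd (lslope g x - rslope g 0) \<and> (\<forall>y\<in>{0..<x}. d dvd (rslope g y - rslope g 0))
     \<and> (d = 0 \<longrightarrow> (\<forall>u\<in>{0..x}. g u = g 0 + of_int (rslope g 0) * u))" using A B C by blast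
    qed
  qed
  then show ?thesis by blast
qed

section \<open>Tent functions\<close>

definition tent :: "('e \<Rightarrow> real) \<Rightarrow> 'e set \<Rightarrow> ('v, 'e) point \<Rightarrow> real" where
  "tent len S x = (case x of Vtx v \<Rightarrow> 0 | Pt e t \<Rightarrow> if e \<in> S then min t (len e - t) else 0)"

lemma edge_fun_tent:
  assumes "0 \<le> t" "t \<le> len e"
  shows "edge_fun ends len (tent len S) e t = (if e \<in> S then min t (len e - t) else 0)"
proof -
  have "min 0 (len e) = 0" "min (len e) 0 = 0" using assms by auto
  then show ?thesis unfolding edge_fun_def tent_def using assms by (simp add: hd_v_def tl_v_def)
qed

lemma plS_tentf:
  assumes L: "0 < L"
  shows "plS 0 L (\<lambda>t. if b then min t (L - t) else 0) {0, L/2, L}"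
  unfolding plS_def
proof (intro conjI allI impI)
  fix x y assume xy: "0 \<le> x" "x < y" "y \<le> L" "{x<..<y} \<inter> {0, L/2, L} = {}"
  have "y \<le> L/2 \<or> L/2 \<le> x"
  proof (rule ccontr)
    assume "\<not> (y \<le> L/2 \<or> L/2 \<le> x)"
    then have "L/2 \<in> {x<..<y} \<inter> {0, L/2, L}" by auto
    then show False using xy(4) by blast
  qed
  then show "\<exists>m::int. \<exists>c. \<forall>t\<in>{x..y}. (if b then min t (L - t) else 0) = c + of_int m * t"
  proof
    assume "y \<le> L/2"
    then show ?thesis
      by (intro exI[of _ "if b then 1 else 0"] exI[of _ 0]) (auto simp: min_def)
  next
    assume "L/2 \<le> x"
    then show ?thesis
      by (intro exI[of _ "if b then -1 else 0"] exI[of _ "if b then L else 0"]) (auto simp: min_def)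
  qed
qed auto

lemma plS_tent:
  assumes L: "0 < len e"
  shows "plS 0 (len e) (edge_fun ends len (tent len S) e) {0, len e/2, len e}"
  by (rule plS_cong[OF plS_tentf[OF L, of "e \<in> S"]]) (simp add: edge_fun_tent)

lemma rat_tent: assumes "\<forall>e\<in>E. 0 < len e" shows "rat E ends len (tent len S)"
  unfolding rat_def
proof
  fix e assume "e \<in> E"
  then have "0 < len e" using assms by auto
  then show "\<exists>S'. plS 0 (len e) (edge_fun ends len (tent len S) e) S'"
    using plS_tent[of len e ends S] \<open>0 < len e\<close> by blast
qed

lemma tent_rslope:
  assumes L: "0 < len e" "0 \<le> t" "t < len e"
  shows "rslope (edge_fun ends len (tent len S) e) t =
    (if e \<in> S then (if t < len e / 2 then 1 else -1) else 0)"
proof -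
  let ?g = "edge_fun ends len (tent len S) e"
  show ?thesis
  proof (cases "e \<in> S")
    case False
    have pc: "\<forall>u\<in>{t..len e}. ?g u = 0 + of_int 0 * u" using False L by (auto simp: edge_fun_tent)
    have "rslope ?g t = 0" by (rule rlin_rslope[OF piece_rlin[OF _ pc]]) (use L in auto)
    then show ?thesis using False L by simp
  next
    case True
    show ?thesis
    proof (cases "t < len e / 2")
      case T: True
      have pc: "\<forall>u\<in>{t..len e/2}. ?g u = 0 + of_int 1 * u" using True L T by (auto simp: edge_fun_tent min_def)
      have "rslope ?g t = 1" by (rule rlin_rslope[OF piece_rlin[OF _ pc]]) (use L T in auto)
    then show ?thesis using True T L by simp
    next
      case F: False
      have pc: "\<forall>u\<in>{t..len e}. ?g u = len e + of_int (-1) * u" using True L F by (auto simp: edge_fun_tent min_def)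
      have "rslope ?g t = -1" by (rule rlin_rslope[OF piece_rlin[OF _ pc]]) (use L in auto)
    then show ?thesis using True F L by simp
    qed
  qed
qed

lemma tent_lslope:
  assumes L: "0 < len e" "0 < t" "t \<le> len e"
  shows "lslope (edge_fun ends len (tent len S) e) t =
    (if e \<in> S then (if t \<le> len e / 2 then 1 else -1) else 0)"
proof -
  let ?g = "edge_fun ends len (tent len S) e"
  show ?thesis
  proof (cases "e \<in> S")
    case False
    have pc: "\<forall>u\<in>{0..t}. ?g u = 0 + of_int 0 * u" using False L by (auto simp: edge_fun_tent)
    have "lslope ?g t = 0" by (rule llin_lslope[OF piece_llin[OF _ pc]]) (use L in auto)
    then show ?thesis using False L by simp
  next
    case True
    show ?thesis
    proof (cases "t \<le> len e / 2")
      case T: True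
      have pc: "\<forall>u\<in>{0..t}. ?g u = 0 + of_int 1 * u" using True L T by (auto simp: edge_fun_tent min_def)
      have "lslope ?g t = 1" by (rule llin_lslope[OF piece_llin[OF _ pc]]) (use L T in auto)
    then show ?thesis using True T L by simp
    next
      case F: False
      have pc: "\<forall>u\<in>{len e/2..t}. ?g u = len e + of_int (-1) * u" using True L F by (auto simp: edge_fun_tent min_def)
      have "lslope ?g t = -1" by (rule llin_lslope[OF piece_llin[OF _ pc]]) (use L F in auto)
    then show ?thesis using True F L by simp
    qed
  qed
qed

definition tdiv :: "'v set \<Rightarrow> ('e \<Rightarrow> 'v \<times> 'v) \<Rightarrow> ('e \<Rightarrow> real) \<Rightarrow> 'e set \<Rightarrow> ('v, 'e) point \<Rightarrow> int" where
  "tdiv V ends len S x = (case x of Vtx v \<Rightarrow> if v \<in> V then int (deg_in S ends v) else 0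
     | Pt e t \<Rightarrow> if e \<in> S \<and> t = len e / 2 then -2 else 0)"

lemma sum_indicator_int:
  assumes "finite A" shows "(\<Sum>e\<in>A. if e \<in> S then (c::int) else 0) = c * int (card {e\<in>A. e \<in> S})"
proof -
  have "(\<Sum>e\<in>{e\<in>A. e \<in> S}. c) = (\<Sum>e\<in>A. if e \<in> S then c else 0)"
    by (rule sum.inter_filter[OF assms])
  then show ?thesis by (simp add: mult.commute)
qed

lemma divf_tent:
  assumes pos: "\<forall>e\<in>E. 0 < len e" and fin: "finite E" and SE: "S \<subseteq> E"
  shows "divf V E ends len (tent len S) = tdiv V ends len S"
proof
  fix x
  show "divf V E ends len (tent len S) x = tdiv V ends len S x"
  proof (cases x)
    case (Vtx v)
    have s1: "(\<Sum>e\<in>{e\<in>E. tl_v ends e = v}. rslope (edge_fun ends len (tent len S) e) 0) =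
       (\<Sum>e\<in>{e\<in>E. tl_v ends e = v}. if e \<in> S then 1 else 0)"
      using pos by (intro sum.cong refl) (auto simp: tent_rslope)
    have s2: "(\<Sum>e\<in>{e\<in>E. hd_v ends e = v}. lslope (edge_fun ends len (tent len S) e) (len e)) =
       (\<Sum>e\<in>{e\<in>E. hd_v ends e = v}. if e \<in> S then -1 else 0)"
      using pos by (intro sum.cong refl) (auto simp: tent_lslope)
    have c1: "{e\<in>E. tl_v ends e = v \<and> e \<in> S} = {e\<in>S. tl_v ends e = v}" using SE by auto
    have c2: "{e\<in>E. hd_v ends e = v \<and> e \<in> S} = {e\<in>S. hd_v ends e = v}" using SE by auto
    show ?thesis unfolding Vtx divf_def tdiv_def point.case s1 s2
      using fin by (simp add: sum_indicator_int c1 c2 deg_in_def)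
  next
    case (Pt e t)
    show ?thesis
    proof (cases "e \<in> E \<and> 0 < t \<and> t < len e")
      case True
      then have L: "0 < len e" using pos by auto
      show ?thesis unfolding Pt divf_def tdiv_def point.case
        using True tent_rslope[where len=len and e=e and t=t and S=S and ends=ends, OF L]
          tent_lslope[where len=len and e=e and t=t and S=S and ends=ends, OF L] by auto
    next
      case False
      have "\<not> (e \<in> S \<and> t = len e / 2)"
      proof
        assume h: "e \<in> S \<and> t = len e / 2"
        then have "e \<in> E" using SE by auto
        then have "0 < len e" using pos by auto
        then show False using h False \<open>e \<in> E\<close> by auto
      qed
      then show ?thesis unfolding Pt divf_def tdiv_def point.case using False by auto
    qed
  qed
qed

lemma tc_facts:
  assumes "tropical_curve V E ends w len"
  shows "finite V" "finite E" "\<forall>e\<in>E. 0 < len e" "\<forall>e\<in>E. tl_v ends e \<in> V \<and> hd_v ends e \<in> V"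
  using assms unfolding tropical_curve_def by blast+

lemma deg_in_split:
  assumes "finite A" "B \<subseteq> A"
  shows "deg_in A ends v = deg_in B ends v + deg_in (A - B) ends v"
proof -
  have 1: "{e\<in>A. tl_v ends e = v} = {e\<in>B. tl_v ends e = v} \<union> {e\<in>A - B. tl_v ends e = v}" using assms by auto
  have 2: "{e\<in>A. hd_v ends e = v} = {e\<in>B. hd_v ends e = v} \<union> {e\<in>A - B. hd_v ends e = v}" using assms by auto
  have fB: "finite B" using assms finite_subset by blast
  have c1: "card {e\<in>A. tl_v ends e = v} = card {e\<in>B. tl_v ends e = v} + card {e\<in>A - B. tl_v ends e = v}"
    unfolding 1 by (rule card_Un_disjoint) (use assms fB in auto)
  have c2: "card {e\<in>A. hd_v ends e = v} = card {e\<in>B. hd_v ends e = v} + card {e\<in>A - B. hd_v ends e = v}"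
    unfolding 2 by (rule card_Un_disjoint) (use assms fB in auto)
  show ?thesis unfolding deg_in_def c1 c2 by simp
qed

lemma deg_in_empty: "deg_in {} ends v = 0"
  unfolding deg_in_def by simp

lemma even_int_div: "even (n::nat) \<Longrightarrow> 2 * int (n div 2) = int n"
  by (metis even_two_times_div_two of_nat_mult of_nat_numeral)

lemma twoT_K:
  assumes fin: "finite E" and Q: "Q \<in> even_subgraphs V E ends"
  shows "2 * T_div V E ends w len Q x - canonical V E ends w x = - tdiv V ends len (E - Q) x"
proof (cases x)
  case (Vtx v)
  show ?thesis
  proof (cases "v \<in> V")
    case True
    have QE: "Q \<subseteq> E" and ev: "even (deg_in Q ends v)" using Q True unfolding even_subgraphs_def by auto
    have d: "deg_in E ends v = deg_in Q ends v + deg_in (E - Q) ends v" by (rule deg_in_split[OF fin QE])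
    have "2 * int (deg_in Q ends v div 2) = int (deg_in Q ends v)" using ev by (rule even_int_div)
    then show ?thesis unfolding Vtx T_div_def canonical_def tdiv_def point.case d using True
      by simp
  next
    case False
    then show ?thesis unfolding Vtx T_div_def canonical_def tdiv_def point.case by simp
  qed
next
  case (Pt e t)
  then show ?thesis unfolding Pt T_div_def canonical_def tdiv_def point.case by simp
qed

lemma tdiv_T:
  assumes Q: "Q \<in> even_subgraphs V E ends"
  shows "tdiv V ends len Q x = 2 * T_div V E ends w len Q x - 2 * T_div V E ends w len {} x"
proof (cases x)
  case (Vtx v)
  show ?thesis
  proof (cases "v \<in> V")
    case True
    have ev: "even (deg_in Q ends v)" using Q True unfolding even_subgraphs_def by auto
    have "2 * int (deg_in Q ends v div 2) = int (deg_in Q ends v)" using ev by (rule even_int_div)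
    then show ?thesis unfolding Vtx T_div_def tdiv_def point.case deg_in_empty using True
      by simp
  next
    case False
    then show ?thesis unfolding Vtx T_div_def tdiv_def point.case by simp
  qed
next
  case (Pt e t)
  have QE: "Q \<subseteq> E" using Q unfolding even_subgraphs_def by auto
  then show ?thesis unfolding Pt T_div_def tdiv_def point.case by auto
qed

lemma principal_twoT_K:
  assumes tc: "tropical_curve V E ends w len" and Q: "Q \<in> even_subgraphs V E ends"
  shows "principal V E ends len (\<lambda>x. 2 * T_div V E ends w len Q x - canonical V E ends w x)"
proof -
  note f = tc_facts[OF tc]
  have ES: "E - Q \<subseteq> E" by auto
  let ?f = "\<lambda>x. of_int (-1) * tent len (E - Q) x"
  have r: "rat E ends len ?f" by (rule rat_scale[OF rat_tent[OF f(3)]])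
  have "divf V E ends len ?f = (\<lambda>x. -1 * divf V E ends len (tent len (E - Q)) x)"
    by (rule divf_scale[OF f(3) rat_tent[OF f(3)]])
  also have "\<dots> = (\<lambda>x. -1 * tdiv V ends len (E - Q) x)" unfolding divf_tent[OF f(3) f(2) ES] ..
  also have "\<dots> = (\<lambda>x. 2 * T_div V E ends w len Q x - canonical V E ends w x)"
    using twoT_K[OF f(2) Q] by simp
  finally show ?thesis unfolding principal_iff[OF f(3)] using r by metis
qed

lemma is_divisor_T:
  assumes tc: "tropical_curve V E ends w len"
  shows "is_divisor V E len (T_div V E ends w len Q)"
proof -
  note f = tc_facts[OF tc]
  have sub: "{x. T_div V E ends w len Q x \<noteq> 0} \<subseteq> Vtx ` V \<union> (\<lambda>e. Pt e (len e / 2)) ` E"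
  proof
    fix x assume "x \<in> {x. T_div V E ends w len Q x \<noteq> 0}"
    then have nz: "T_div V E ends w len Q x \<noteq> 0" by simp
    show "x \<in> Vtx ` V \<union> (\<lambda>e. Pt e (len e / 2)) ` E"
    proof (cases x)
      case (Vtx v)
      then have "v \<in> V" using nz unfolding T_div_def by (cases "v \<in> V") simp_all
      then show ?thesis using Vtx by blast
    next
      case (Pt e t)
      then have "e \<in> E - Q \<and> t = len e / 2" using nz unfolding T_div_def point.case
        by (simp split: if_split_asm)
      then show ?thesis using Pt by blast
    qed
  qed
  have "Vtx ` V \<union> (\<lambda>e. Pt e (len e / 2)) ` E \<subseteq> points V E len"
  proof
    fix x assume "x \<in> Vtx ` V \<union> (\<lambda>e. Pt e (len e / 2)) ` E"
    then consider (a) v where "v \<in> V" "x = Vtx v" | (b) e where "e \<in> E" "x = Pt e (len e / 2)" by blast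
    then show "x \<in> points V E len"
    proof cases
      case a then show ?thesis unfolding points_def by auto
    next
      case b
      then have "0 < len e" using f(3) by auto
      then have "0 < len e / 2" "len e / 2 < len e" by auto
      then show ?thesis unfolding points_def using b by blast
    qed
  qed
  moreover have "finite (Vtx ` V \<union> (\<lambda>e. Pt e (len e / 2)) ` E)" using f(1,2) by simp
  ultimately show ?thesis unfolding is_divisor_def using sub
    by (meson finite_subset order_trans)
qed

lemma theta_T:
  assumes tc: "tropical_curve V E ends w len" and Q: "Q \<in> even_subgraphs V E ends"
  shows "cls V E ends len (T_div V E ends w len Q) \<in> theta_chars V E ends w len"
  unfolding theta_chars_def lin_equiv_def
  using is_divisor_T[OF tc] principal_twoT_K[OF tc Q] by blast

section \<open>Injectivity\<close>

lemma zero_slopes: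
  assumes fV: "finite V" and fE: "finite E" and pos: "\<forall>e\<in>E. 0 < len e"
    and ends: "\<forall>e\<in>E. tl_v ends e \<in> V \<and> hd_v ends e \<in> V"
    and r: "rat E ends len h" and z: "\<forall>x. divf V E ends len h x = 0"
  shows "\<forall>e\<in>E. rslope (edge_fun ends len h e) 0 = 0"
proof -
  define s where "s e = rslope (edge_fun ends len h e) 0" for e
  define phi where "phi v = h (Vtx v)" for v
  have edge: "lslope (edge_fun ends len h e) (len e) = s e \<and>
      phi (hd_v ends e) = phi (tl_v ends e) + of_int (s e) * len e" if e: "e \<in> E" for e
  proof -
    have L: "0 < len e" using pos e by auto
    obtain S where S: "plS 0 (len e) (edge_fun ends len h e) S" using r e unfolding rat_def by blast
    have H: "\<forall>t\<in>{0<..<len e}. (0::int) dvd (rslope (edge_fun ends len h e) t - lslope (edge_fun ends len h e) t)"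
    proof
      fix t assume t: "t \<in> {0<..<len e}"
      have "divf V E ends len h (Pt e t) = 0" using z by simp
      then show "(0::int) dvd (rslope (edge_fun ends len h e) t - lslope (edge_fun ends len h e) t)"
        using t e unfolding divf_def point.case by simp
    qed
    have Le: "len e \<in> {0<..len e}" using L by simp
    note X = edge_induct[OF S L H, rule_format, OF Le]
    have A: "lslope (edge_fun ends len h e) (len e) = s e" using conjunct1[OF X] unfolding s_def by simp
    have "len e \<in> {0..len e}" using L by simp
    from conjunct2[OF conjunct2[OF X], rule_format, OF refl this]
    have B: "edge_fun ends len h e (len e) = edge_fun ends len h e 0 + of_int (s e) * len e"
      unfolding s_def .
    have "edge_fun ends len h e 0 = phi (tl_v ends e)" unfolding edge_fun_def phi_def by simp
    moreover have "edge_fun ends len h e (len e) = phi (hd_v ends e)" unfolding edge_fun_def phi_def using L by simp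
    ultimately show ?thesis using A B by simp
  qed
  have vert: "(\<Sum>e\<in>{e\<in>E. tl_v ends e = v}. s e) = (\<Sum>e\<in>{e\<in>E. hd_v ends e = v}. s e)" if v: "v \<in> V" for v
  proof -
    have "divf V E ends len h (Vtx v) = 0" using z by simp
    then have "(\<Sum>e\<in>{e\<in>E. tl_v ends e = v}. s e) -
        (\<Sum>e\<in>{e\<in>E. hd_v ends e = v}. lslope (edge_fun ends len h e) (len e)) = 0"
      unfolding divf_def point.case s_def using v by simp
    moreover have "(\<Sum>e\<in>{e\<in>E. hd_v ends e = v}. lslope (edge_fun ends len h e) (len e)) =
        (\<Sum>e\<in>{e\<in>E. hd_v ends e = v}. s e)"
      using edge by (intro sum.cong) auto
    ultimately show ?thesis by simp
  qed
  have grp: "(\<Sum>e\<in>E. of_int (s e) * phi (k e)) = (\<Sum>v\<in>V. phi v * of_int (\<Sum>e\<in>{e\<in>E. k e = v}. s e))"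
    if k: "k ` E \<subseteq> V" for k
  proof -
    have "(\<Sum>e\<in>E. of_int (s e) * phi (k e)) = (\<Sum>v\<in>V. \<Sum>e\<in>{e\<in>E. k e = v}. of_int (s e) * phi (k e))"
      using sum.group[OF fE fV k, of "\<lambda>e. of_int (s e) * phi (k e)"] by simp
    also have "\<dots> = (\<Sum>v\<in>V. phi v * of_int (\<Sum>e\<in>{e\<in>E. k e = v}. s e))"
    proof (intro sum.cong refl)
      fix v assume "v \<in> V"
      have "(\<Sum>e\<in>{e\<in>E. k e = v}. of_int (s e) * phi (k e)) = (\<Sum>e\<in>{e\<in>E. k e = v}. phi v * of_int (s e))"
        by (intro sum.cong refl) auto
      then show "(\<Sum>e\<in>{e\<in>E. k e = v}. of_int (s e) * phi (k e)) = phi v * of_int (\<Sum>e\<in>{e\<in>E. k e = v}. s e)"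
        by (simp add: sum_distrib_left)
    qed
    finally show ?thesis .
  qed
  have hdV: "hd_v ends ` E \<subseteq> V" and tlV: "tl_v ends ` E \<subseteq> V" using ends by auto
  have "(\<Sum>e\<in>E. of_int (s e) * phi (hd_v ends e)) = (\<Sum>e\<in>E. of_int (s e) * phi (tl_v ends e))"
    unfolding grp[OF hdV] grp[OF tlV] using vert by (intro sum.cong refl) simp
  then have "(\<Sum>e\<in>E. of_int (s e) * phi (hd_v ends e) - of_int (s e) * phi (tl_v ends e)) = 0"
    by (simp add: sum_subtractf)
  moreover have "(\<Sum>e\<in>E. of_int (s e) * phi (hd_v ends e) - of_int (s e) * phi (tl_v ends e)) =
      (\<Sum>e\<in>E. of_int (s e) * of_int (s e) * len e)"
  proof (intro sum.cong refl)
    fix e assume "e \<in> E"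
    then have "phi (hd_v ends e) = phi (tl_v ends e) + of_int (s e) * len e" by (rule conjunct2[OF edge])
    then show "of_int (s e) * phi (hd_v ends e) - of_int (s e) * phi (tl_v ends e) = of_int (s e) * of_int (s e) * len e"
      by (simp add: algebra_simps)
  qed
  ultimately have S0: "(\<Sum>e\<in>E. of_int (s e) * of_int (s e) * len e) = (0::real)" by simp
  have nn: "\<forall>e\<in>E. 0 \<le> (of_int (s e) * of_int (s e) * len e :: real)"
  proof
    fix e assume "e \<in> E"
    then have "0 < len e" using pos by auto
    moreover have "0 \<le> (of_int (s e) * of_int (s e) :: real)" by (rule zero_le_square)
    ultimately show "0 \<le> (of_int (s e) * of_int (s e) * len e :: real)" by (simp add: mult_nonneg_nonneg)
  qed
  have all0: "\<forall>e\<in>E. (of_int (s e) * of_int (s e) * len e :: real) = 0"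
    using iffD1[OF sum_nonneg_eq_0_iff[OF fE] S0] nn by blast
  show ?thesis
  proof
    fix e assume e: "e \<in> E"
    then have "0 < len e" using pos by auto
    moreover have "(of_int (s e) * of_int (s e) * len e :: real) = 0" using all0 e by blast
    ultimately have "s e = 0" by simp
    then show "rslope (edge_fun ends len h e) 0 = 0" unfolding s_def .
  qed
qed

lemma hzero_pt:
  assumes fE: "finite E" and P: "P \<in> even_subgraphs V E ends" and Q: "Q \<in> even_subgraphs V E ends"
  shows "2 * (T_div V E ends w len P x - T_div V E ends w len Q x) +
     (-1 * tdiv V ends len (P - Q) x + tdiv V ends len (Q - P) x) = 0"
proof -
  have PE: "P \<subseteq> E" and QE: "Q \<subseteq> E" using P Q unfolding even_subgraphs_def by auto
  show ?thesis
  proof (cases x)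
    case (Vtx v)
    show ?thesis
    proof (cases "v \<in> V")
      case True
      have evP: "even (deg_in P ends v)" and evQ: "even (deg_in Q ends v)" using P Q True unfolding even_subgraphs_def by auto
      have fP: "finite P" and fQ: "finite Q" using PE QE fE finite_subset by auto
      have dP: "deg_in P ends v = deg_in (P \<inter> Q) ends v + deg_in (P - Q) ends v"
        using deg_in_split[OF fP, of "P \<inter> Q"] by (simp add: Diff_Int)
      have dQ: "deg_in Q ends v = deg_in (P \<inter> Q) ends v + deg_in (Q - P) ends v"
        using deg_in_split[OF fQ, of "P \<inter> Q"] by (simp add: Diff_Int Int_commute)
      have "2 * int (deg_in P ends v div 2) = int (deg_in P ends v)" using evP by (rule even_int_div)
      moreover have "2 * int (deg_in Q ends v div 2) = int (deg_in Q ends v)" using evQ by (rule even_int_div)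
      ultimately show ?thesis unfolding Vtx T_div_def tdiv_def point.case using True dP dQ
        by (simp add: algebra_simps)
    next
      case False
      then show ?thesis unfolding Vtx T_div_def tdiv_def point.case by simp
    qed
  next
    case (Pt e t)
    show ?thesis unfolding Pt T_div_def tdiv_def point.case using PE QE by auto
  qed
qed

lemma T_inj:
  assumes tc: "tropical_curve V E ends w len" and P: "P \<in> even_subgraphs V E ends"
    and Q: "Q \<in> even_subgraphs V E ends"
    and eqv: "lin_equiv V E ends len (T_div V E ends w len P) (T_div V E ends w len Q)"
  shows "P = Q"
proof -
  note f = tc_facts[OF tc]
  have PE: "P \<subseteq> E" and QE: "Q \<subseteq> E" using P Q unfolding even_subgraphs_def by auto
  obtain F where rF: "rat E ends len F"
    and dF: "(\<lambda>x. T_div V E ends w len P x - T_div V E ends w len Q x) = divf V E ends len F"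
    using eqv unfolding lin_equiv_def principal_iff[OF f(3)] by blast
  let ?A = "\<lambda>x. of_int 2 * F x"
  let ?B = "\<lambda>x. of_int (-1) * tent len (P - Q) x"
  let ?C = "tent len (Q - P)"
  let ?BC = "\<lambda>x. ?B x + ?C x"
  define h where "h = (\<lambda>x. ?A x + ?BC x)"
  have rA: "rat E ends len ?A" by (rule rat_scale[OF rF])
  have rB: "rat E ends len ?B" by (rule rat_scale[OF rat_tent[OF f(3)]])
  have rC: "rat E ends len ?C" by (rule rat_tent[OF f(3)])
  have rBC: "rat E ends len ?BC" by (rule rat_add[OF rB rC])
  have rh: "rat E ends len h" unfolding h_def by (rule rat_add[OF rA rBC])
  have PQE: "P - Q \<subseteq> E" and QPE: "Q - P \<subseteq> E" using PE QE by auto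
  have dA: "divf V E ends len ?A = (\<lambda>x. 2 * divf V E ends len F x)"
    by (rule divf_scale[OF f(3) rF])
  have dB: "divf V E ends len ?B = (\<lambda>x. -1 * tdiv V ends len (P - Q) x)"
  proof -
    have "divf V E ends len ?B = (\<lambda>x. -1 * divf V E ends len (tent len (P - Q)) x)"
      by (rule divf_scale[OF f(3) rat_tent[OF f(3)]])
    also have "\<dots> = (\<lambda>x. -1 * tdiv V ends len (P - Q) x)" unfolding divf_tent[OF f(3) f(2) PQE] ..
    finally show ?thesis .
  qed
  have dC: "divf V E ends len ?C = tdiv V ends len (Q - P)" by (rule divf_tent[OF f(3) f(2) QPE])
  have dBC: "divf V E ends len ?BC = (\<lambda>x. divf V E ends len ?B x + divf V E ends len ?C x)"
    by (rule divf_add[OF f(3) rB rC])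
  have dh: "divf V E ends len h = (\<lambda>x. divf V E ends len ?A x + divf V E ends len ?BC x)"
    unfolding h_def by (rule divf_add[OF f(3) rA rBC])
  have z: "\<forall>x. divf V E ends len h x = 0"
  proof
    fix x
    have "divf V E ends len F x = T_div V E ends w len P x - T_div V E ends w len Q x"
      using dF by metis
    then show "divf V E ends len h x = 0"
      unfolding dh dA dBC dB dC using hzero_pt[OF f(2) P Q, of w len x] by simp
  qed
  have zs: "\<forall>e\<in>E. rslope (edge_fun ends len h e) 0 = 0"
    by (rule zero_slopes[OF f(1) f(2) f(3) f(4) rh z])
  have sl: "rslope (edge_fun ends len h e) 0 =
      2 * rslope (edge_fun ends len F e) 0 + (-1 * rslope (edge_fun ends len (tent len (P - Q)) e) 0
        + rslope (edge_fun ends len (tent len (Q - P)) e) 0)" if e: "e \<in> E" for e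
  proof -
    have L: "0 < len e" using f(3) e by auto
    have "rslope (edge_fun ends len h e) 0 = rslope (edge_fun ends len ?A e) 0 + rslope (edge_fun ends len ?BC e) 0"
      unfolding h_def by (rule rslope_edge_add[OF rA rBC e _ L]) simp
    also have "rslope (edge_fun ends len ?A e) 0 = 2 * rslope (edge_fun ends len F e) 0"
      by (rule rslope_edge_scale[OF rF e _ L]) simp
    also have "rslope (edge_fun ends len ?BC e) 0 = rslope (edge_fun ends len ?B e) 0 + rslope (edge_fun ends len ?C e) 0"
      by (rule rslope_edge_add[OF rB rC e _ L]) simp
    also have "rslope (edge_fun ends len ?B e) 0 = -1 * rslope (edge_fun ends len (tent len (P - Q)) e) 0"
      by (rule rslope_edge_scale[OF rat_tent[OF f(3)] e _ L]) simp
    finally show ?thesis .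
  qed
  have "P - Q = {}"
  proof (rule ccontr)
    assume "P - Q \<noteq> {}"
    then obtain e where e: "e \<in> P" "e \<notin> Q" by auto
    then have eE: "e \<in> E" using PE by auto
    then have L: "0 < len e" using f(3) by auto
    have t1: "rslope (edge_fun ends len (tent len (P - Q)) e) 0 = 1"
      using tent_rslope[where len=len and e=e and t=0 and S="P - Q" and ends=ends, OF L] L e by simp
    have t2: "rslope (edge_fun ends len (tent len (Q - P)) e) 0 = 0"
      using tent_rslope[where len=len and e=e and t=0 and S="Q - P" and ends=ends, OF L] L e by simp
    have "rslope (edge_fun ends len h e) 0 = 0" using zs eE by blast
    then have "0 = 2 * rslope (edge_fun ends len F e) 0 + (-1 * 1 + 0)"
      using sl[OF eE] t1 t2 by simp
    then show False by presburger
  qed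
  moreover have "Q - P = {}"
  proof (rule ccontr)
    assume "Q - P \<noteq> {}"
    then obtain e where e: "e \<in> Q" "e \<notin> P" by auto
    then have eE: "e \<in> E" using QE by auto
    then have L: "0 < len e" using f(3) by auto
    have t1: "rslope (edge_fun ends len (tent len (P - Q)) e) 0 = 0"
      using tent_rslope[where len=len and e=e and t=0 and S="P - Q" and ends=ends, OF L] L e by simp
    have t2: "rslope (edge_fun ends len (tent len (Q - P)) e) 0 = 1"
      using tent_rslope[where len=len and e=e and t=0 and S="Q - P" and ends=ends, OF L] L e by simp
    have "rslope (edge_fun ends len h e) 0 = 0" using zs eE by blast
    then have "0 = 2 * rslope (edge_fun ends len F e) 0 + (-1 * 0 + 1)"
      using sl[OF eE] t1 t2 by simp
    then show False by presburger
  qed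
  ultimately show ?thesis by auto
qed

section \<open>Surjectivity\<close>

lemma parity_sum:
  fixes r :: "'a \<Rightarrow> int"
  assumes "finite A"
  shows "2 dvd ((\<Sum>e\<in>A. r e) - int (card {e\<in>A. odd (r e)}))"
  using assms
proof (induction A rule: finite_induct)
  case empty
  then show ?case by simp
next
  case (insert x F)
  have fF: "finite {e\<in>F. odd (r e)}" using insert.hyps by simp
  have xF: "x \<notin> {e\<in>F. odd (r e)}" using insert.hyps by simp
  show ?case
  proof (cases "odd (r x)")
    case True
    then have "{e\<in>insert x F. odd (r e)} = insert x {e\<in>F. odd (r e)}" by auto
    then have c: "card {e\<in>insert x F. odd (r e)} = Suc (card {e\<in>F. odd (r e)})"
      using card_insert_disjoint[OF fF xF] by simp
    have "(\<Sum>e\<in>insert x F. r e) - int (card {e\<in>insert x F. odd (r e)}) =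
       (r x - 1) + ((\<Sum>e\<in>F. r e) - int (card {e\<in>F. odd (r e)}))"
      unfolding c using insert.hyps by simp
    moreover have "2 dvd (r x - 1)" using True by presburger
    ultimately show ?thesis using insert.IH by simp
  next
    case False
    then have "{e\<in>insert x F. odd (r e)} = {e\<in>F. odd (r e)}" by auto
    then have "(\<Sum>e\<in>insert x F. r e) - int (card {e\<in>insert x F. odd (r e)}) =
       r x + ((\<Sum>e\<in>F. r e) - int (card {e\<in>F. odd (r e)}))"
      using insert.hyps by simp
    moreover have "2 dvd r x" using False by presburger
    ultimately show ?thesis using insert.IH by simp
  qed
qed

lemma T_surj:
  assumes tc: "tropical_curve V E ends w len" and D: "is_divisor V E len D"
    and K: "lin_equiv V E ends len (\<lambda>x. 2 * D x) (canonical V E ends w)"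
  shows "\<exists>P\<in>even_subgraphs V E ends. lin_equiv V E ends len D (T_div V E ends w len P)"
proof -
  note f = tc_facts[OF tc]
  have E0: "{} \<in> even_subgraphs V E ends" unfolding even_subgraphs_def deg_in_def by simp
  obtain g1 where rg1: "rat E ends len g1"
    and dg1: "(\<lambda>x. 2 * D x - canonical V E ends w x) = divf V E ends len g1"
    using K unfolding lin_equiv_def principal_iff[OF f(3)] by blast
  define g where "g = (\<lambda>x. g1 x + tent len E x)"
  have rg: "rat E ends len g" unfolding g_def by (rule rat_add[OF rg1 rat_tent[OF f(3)]])
  have dg: "divf V E ends len g x = 2 * (D x - T_div V E ends w len {} x)" for x
  proof -
    have "divf V E ends len g = (\<lambda>x. divf V E ends len g1 x + divf V E ends len (tent len E) x)"
      unfolding g_def by (rule divf_add[OF f(3) rg1 rat_tent[OF f(3)]])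
    also have "\<dots> = (\<lambda>x. divf V E ends len g1 x + tdiv V ends len E x)"
      unfolding divf_tent[OF f(3) f(2) subset_refl] ..
    finally have "divf V E ends len g x = divf V E ends len g1 x + tdiv V ends len E x" by simp
    moreover have "divf V E ends len g1 x = 2 * D x - canonical V E ends w x" using dg1 by metis
    moreover have "2 * T_div V E ends w len {} x - canonical V E ends w x = - tdiv V ends len (E - {}) x"
      by (rule twoT_K[OF f(2) E0])
    ultimately show ?thesis by simp
  qed
  define r where "r e = rslope (edge_fun ends len g e) 0" for e
  have par: "(\<forall>u\<in>{0..<len e}. 2 dvd (rslope (edge_fun ends len g e) u - r e)) \<and>
      2 dvd (lslope (edge_fun ends len g e) (len e) - r e)" if e: "e \<in> E" for e
  proof -
    have L: "0 < len e" using f(3) e by auto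
    obtain S where S: "plS 0 (len e) (edge_fun ends len g e) S" using rg e unfolding rat_def by blast
    have H: "\<forall>t\<in>{0<..<len e}. (2::int) dvd (rslope (edge_fun ends len g e) t - lslope (edge_fun ends len g e) t)"
    proof
      fix t assume t: "t \<in> {0<..<len e}"
      have "divf V E ends len g (Pt e t) = 2 * (D (Pt e t) - T_div V E ends w len {} (Pt e t))" by (rule dg)
      moreover have "divf V E ends len g (Pt e t) =
          rslope (edge_fun ends len g e) t - lslope (edge_fun ends len g e) t"
        using t e unfolding divf_def point.case by simp
      ultimately have "rslope (edge_fun ends len g e) t - lslope (edge_fun ends len g e) t =
        2 * (D (Pt e t) - T_div V E ends w len {} (Pt e t))" by simp
      then show "(2::int) dvd (rslope (edge_fun ends len g e) t - lslope (edge_fun ends len g e) t)"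
        by (simp only: dvd_triv_left)
    qed
    have Le: "len e \<in> {0<..len e}" using L by simp
    note X = edge_induct[OF S L H, rule_format, OF Le]
    show ?thesis using conjunct1[OF X] conjunct1[OF conjunct2[OF X]] unfolding r_def by blast
  qed
  define P where "P = {e\<in>E. odd (r e)}"
  have PE: "P \<subseteq> E" unfolding P_def by auto
  have Pev: "P \<in> even_subgraphs V E ends"
    unfolding even_subgraphs_def
  proof (intro CollectI conjI PE ballI)
    fix v assume v: "v \<in> V"
    let ?A1 = "{e\<in>E. tl_v ends e = v}" and ?A2 = "{e\<in>E. hd_v ends e = v}"
    have f1: "finite ?A1" and f2: "finite ?A2" using f(2) by auto
    have "divf V E ends len g (Vtx v) =
        (\<Sum>e\<in>?A1. r e) - (\<Sum>e\<in>?A2. lslope (edge_fun ends len g e) (len e))"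
      unfolding divf_def point.case r_def using v by simp
    moreover have "divf V E ends len g (Vtx v) = 2 * (D (Vtx v) - T_div V E ends w len {} (Vtx v))" by (rule dg)
    ultimately have "(\<Sum>e\<in>?A1. r e) - (\<Sum>e\<in>?A2. lslope (edge_fun ends len g e) (len e)) =
       2 * (D (Vtx v) - T_div V E ends w len {} (Vtx v))" by simp
    then have a: "2 dvd ((\<Sum>e\<in>?A1. r e) - (\<Sum>e\<in>?A2. lslope (edge_fun ends len g e) (len e)))"
      by (simp only: dvd_triv_left)
    have "2 dvd (\<Sum>e\<in>?A2. lslope (edge_fun ends len g e) (len e) - r e)"
    proof (rule dvd_sum)
      fix e assume "e \<in> ?A2"
      then have "e \<in> E" by simp
      then show "2 dvd (lslope (edge_fun ends len g e) (len e) - r e)" using par by blast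
    qed
    then have b: "2 dvd ((\<Sum>e\<in>?A2. lslope (edge_fun ends len g e) (len e)) - (\<Sum>e\<in>?A2. r e))"
      by (simp add: sum_subtractf)
    have c: "2 dvd (2 * (\<Sum>e\<in>?A2. r e))" by simp
    have "2 dvd ((\<Sum>e\<in>?A1. r e) + (\<Sum>e\<in>?A2. r e))"
    proof -
      have "(\<Sum>e\<in>?A1. r e) + (\<Sum>e\<in>?A2. r e) =
        ((\<Sum>e\<in>?A1. r e) - (\<Sum>e\<in>?A2. lslope (edge_fun ends len g e) (len e))) +
        ((\<Sum>e\<in>?A2. lslope (edge_fun ends len g e) (len e)) - (\<Sum>e\<in>?A2. r e)) + 2 * (\<Sum>e\<in>?A2. r e)"
        by simp
      moreover have "2 dvd (((\<Sum>e\<in>?A1. r e) - (\<Sum>e\<in>?A2. lslope (edge_fun ends len g e) (len e))) +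
        ((\<Sum>e\<in>?A2. lslope (edge_fun ends len g e) (len e)) - (\<Sum>e\<in>?A2. r e)) + 2 * (\<Sum>e\<in>?A2. r e))"
        by (intro dvd_add a b c)
      ultimately show ?thesis by simp
    qed
    moreover have p1: "2 dvd ((\<Sum>e\<in>?A1. r e) - int (card {e\<in>?A1. odd (r e)}))" by (rule parity_sum[OF f1])
    moreover have p2: "2 dvd ((\<Sum>e\<in>?A2. r e) - int (card {e\<in>?A2. odd (r e)}))" by (rule parity_sum[OF f2])
    ultimately have "2 dvd (int (card {e\<in>?A1. odd (r e)}) + int (card {e\<in>?A2. odd (r e)}))"
    proof -
      assume s: "2 dvd ((\<Sum>e\<in>?A1. r e) + (\<Sum>e\<in>?A2. r e))"
      have "int (card {e\<in>?A1. odd (r e)}) + int (card {e\<in>?A2. odd (r e)}) =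
        ((\<Sum>e\<in>?A1. r e) + (\<Sum>e\<in>?A2. r e)) - ((\<Sum>e\<in>?A1. r e) - int (card {e\<in>?A1. odd (r e)}))
         - ((\<Sum>e\<in>?A2. r e) - int (card {e\<in>?A2. odd (r e)}))" by simp
      moreover have "2 dvd (((\<Sum>e\<in>?A1. r e) + (\<Sum>e\<in>?A2. r e)) - ((\<Sum>e\<in>?A1. r e) - int (card {e\<in>?A1. odd (r e)}))
         - ((\<Sum>e\<in>?A2. r e) - int (card {e\<in>?A2. odd (r e)})))"
        by (intro dvd_diff s p1 p2)
      ultimately show ?thesis by simp
    qed
    moreover have "{e\<in>?A1. odd (r e)} = {e\<in>P. tl_v ends e = v}" unfolding P_def by auto
    moreover have "{e\<in>?A2. odd (r e)} = {e\<in>P. hd_v ends e = v}" unfolding P_def by auto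
    ultimately have "2 dvd int (deg_in P ends v)" unfolding deg_in_def by simp
    then show "even (deg_in P ends v)" by simp
  qed
  define fP where "fP = (\<lambda>x. (g x - tent len P x) / 2)"
  have efP: "edge_fun ends len fP e = (\<lambda>t. (edge_fun ends len g e t - edge_fun ends len (tent len P) e t) / 2)" for e
    unfolding fP_def edge_fun_def by auto
  have rfP: "rat E ends len fP"
    unfolding rat_def
  proof
    fix e assume e: "e \<in> E"
    have L: "0 < len e" using f(3) e by auto
    obtain S where S: "plS 0 (len e) (edge_fun ends len g e) S" using rg e unfolding rat_def by blast
    have St: "plS 0 (len e) (edge_fun ends len (tent len P) e) {0, len e/2, len e}" by (rule plS_tent[where len=len and e=e, OF L])
    have "plS 0 (len e) (edge_fun ends len fP e) (S \<union> {0, len e/2, len e})"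
      unfolding plS_def
    proof (intro conjI allI impI)
      show "finite (S \<union> {0, len e / 2, len e})" using S unfolding plS_def by simp
      show "0 \<in> S \<union> {0, len e / 2, len e}" "len e \<in> S \<union> {0, len e / 2, len e}" by auto
      fix x y assume xy: "0 \<le> x" "x < y" "y \<le> len e" "{x<..<y} \<inter> (S \<union> {0, len e / 2, len e}) = {}"
      have e1: "{x<..<y} \<inter> S = {}" and e2: "{x<..<y} \<inter> {0, len e / 2, len e} = {}" using xy(4) by auto
      obtain m c where mc: "\<forall>t\<in>{x..y}. edge_fun ends len g e t = c + of_int m * t"
        using plS_piece[OF S xy(1-3) e1] by blast
      obtain m' c' where mc': "\<forall>t\<in>{x..y}. edge_fun ends len (tent len P) e t = c' + of_int m' * t"
        using plS_piece[OF St xy(1-3) e2] by blast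
      have xL: "x < len e" using xy by simp
      have "rslope (edge_fun ends len g e) x = m" by (rule rlin_rslope[OF piece_rlin[OF xy(2) mc]])
      then have pm: "2 dvd (m - r e)" using par[OF e] xy xL by auto
      have "rslope (edge_fun ends len (tent len P) e) x = m'" by (rule rlin_rslope[OF piece_rlin[OF xy(2) mc']])
      then have m'v: "m' = (if e \<in> P then (if x < len e / 2 then 1 else -1) else 0)"
        using tent_rslope[where len=len and e=e and t=x and S=P and ends=ends, OF L xy(1) xL] by simp
      have ev: "2 dvd (m - m')"
      proof (cases "e \<in> P")
        case True
        then have "odd (r e)" unfolding P_def by simp
        moreover have "m' = 1 \<or> m' = -1" using m'v True by simp
        ultimately show ?thesis using pm by presburger
      next
        case False
        then have "even (r e)" unfolding P_def using e by simp
        moreover have "m' = 0" using m'v False by simp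
        ultimately show ?thesis using pm by presburger
      qed
      then obtain q where q: "m - m' = 2 * q" by blast
      show "\<exists>m::int. \<exists>c. \<forall>t\<in>{x..y}. edge_fun ends len fP e t = c + of_int m * t"
      proof (intro exI[of _ q] exI[of _ "(c - c') / 2"] ballI)
        fix t assume t: "t \<in> {x..y}"
        have "of_int m - of_int m' = (2 * of_int q :: real)" using q by (metis of_int_diff of_int_mult of_int_numeral)
        then show "edge_fun ends len fP e t = (c - c') / 2 + of_int q * t"
          unfolding efP using mc t mc' by (simp add: field_simps)
      qed
    qed
    then show "\<exists>S. plS 0 (len e) (edge_fun ends len fP e) S" by blast
  qed
  have d2: "(\<lambda>x. of_int 2 * fP x) = (\<lambda>x. g x + of_int (-1) * tent len P x)"
    unfolding fP_def by (simp add: fun_eq_iff)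
  have rtP: "rat E ends len (\<lambda>x. of_int (-1) * tent len P x)" by (rule rat_scale[OF rat_tent[OF f(3)]])
  have dfP: "divf V E ends len fP x = D x - T_div V E ends w len P x" for x
  proof -
    have "2 * divf V E ends len fP x = divf V E ends len (\<lambda>x. of_int 2 * fP x) x"
      using divf_scale[OF f(3) rfP, where k=2 and V=V] by simp
    also have "\<dots> = divf V E ends len (\<lambda>x. g x + of_int (-1) * tent len P x) x" unfolding d2 ..
    also have "\<dots> = divf V E ends len g x + divf V E ends len (\<lambda>x. of_int (-1) * tent len P x) x"
      using divf_add[OF f(3) rg rtP] by simp
    also have "divf V E ends len (\<lambda>x. of_int (-1) * tent len P x) = (\<lambda>x. -1 * divf V E ends len (tent len P) x)"
      by (rule divf_scale[OF f(3) rat_tent[OF f(3)]])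
    also have "\<dots> = (\<lambda>x. -1 * tdiv V ends len P x)" unfolding divf_tent[OF f(3) f(2) PE] ..
    finally have "2 * divf V E ends len fP x = divf V E ends len g x + -1 * tdiv V ends len P x" by simp
    moreover have "tdiv V ends len P x = 2 * T_div V E ends w len P x - 2 * T_div V E ends w len {} x"
      by (rule tdiv_T[OF Pev])
    ultimately show ?thesis using dg[of x] by simp
  qed
  have "principal V E ends len (\<lambda>x. D x - T_div V E ends w len P x)"
    unfolding principal_iff[OF f(3)] using rfP dfP by (intro exI[of _ fP]) auto
  then show ?thesis using Pev unfolding lin_equiv_def by blast
qed

theorem proposition3p2:
  fixes V :: "'v set" and E :: "'e set" and ends :: "'e \<Rightarrow> 'v \<times> 'v"
    and w :: "'v \<Rightarrow> nat" and len :: "'e \<Rightarrow> real" and P :: "'e set"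
  assumes "tropical_curve V E ends w len"
    and "P \<in> even_subgraphs V E ends"
  shows "cls V E ends len (T_div V E ends w len P) \<in> theta_chars V E ends w len
    \<and> bij_betw (\<lambda>Q. cls V E ends len (T_div V E ends w len Q))
           (even_subgraphs V E ends) (theta_chars V E ends w len)"
proof -
  note tc = assms(1)
  note f = tc_facts[OF tc]
  have inj: "inj_on (\<lambda>Q. cls V E ends len (T_div V E ends w len Q)) (even_subgraphs V E ends)"
  proof (rule inj_onI)
    fix P Q assume P: "P \<in> even_subgraphs V E ends" and Q: "Q \<in> even_subgraphs V E ends"
      and eq: "cls V E ends len (T_div V E ends w len P) = cls V E ends len (T_div V E ends w len Q)"
    have "lin_equiv V E ends len (T_div V E ends w len P) (T_div V E ends w len Q)"
      by (rule cls_eqD[OF f(3) eq is_divisor_T[OF tc]])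
    then show "P = Q" by (rule T_inj[OF tc P Q])
  qed
  have img: "(\<lambda>Q. cls V E ends len (T_div V E ends w len Q)) ` even_subgraphs V E ends = theta_chars V E ends w len"
  proof
    show "(\<lambda>Q. cls V E ends len (T_div V E ends w len Q)) ` even_subgraphs V E ends \<subseteq> theta_chars V E ends w len"
      using theta_T[OF tc] by blast
    show "theta_chars V E ends w len \<subseteq> (\<lambda>Q. cls V E ends len (T_div V E ends w len Q)) ` even_subgraphs V E ends"
    proof
      fix X assume "X \<in> theta_chars V E ends w len"
      then obtain D where X: "X = cls V E ends len D" and D: "is_divisor V E len D"
        and K: "lin_equiv V E ends len (\<lambda>x. 2 * D x) (canonical V E ends w)"
        unfolding theta_chars_def by blast
      obtain Q where Q: "Q \<in> even_subgraphs V E ends" and eqv: "lin_equiv V E ends len D (T_div V E ends w len Q)"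
        using T_surj[OF tc D K] by blast
      have "X = cls V E ends len (T_div V E ends w len Q)" unfolding X by (rule cls_eq[OF f(3) eqv])
      then show "X \<in> (\<lambda>Q. cls V E ends len (T_div V E ends w len Q)) ` even_subgraphs V E ends"
        using Q by blast
    qed
  qed
  show ?thesis using theta_T[OF tc assms(2)] inj img unfolding bij_betw_def by blast
qed

end
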